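(* Let Assumptions A1, A2 and A3 hold, $\kappa>1$, and run Algorithm PBA with $\alpha = \frac{1}{L}$, $\eta = \frac{\sqrt{\kappa}-1}{\sqrt{\kappa}+1}$, $0<\beta \le \frac{1}{2}(L_\Phi + \Gamma + \kappa^2)^{-1}$, and $T \ge \frac{\ln(8(1+\kappa))}{\ln((1-\kappa^{-1/2})^{-1})}$. Writing $z_k=(x_k,y_k)$, for all $k$, $$\mathrm{dist}\big(\mathbf{0},\partial_z H(z_{k+1})\big)\le \frac{2}{\beta}\|x_{k+1}-x_k\| + \sqrt{\Gamma}\,\|y_{k+1}-y^*(x_k)\| + 2\big(2.5^{T+1}+\kappa\big)\|y_{k+2}-y^*(x_{k+1})\|.$$
   Context: Problem: $\min_{x\in\mathbb{R}^d} \Phi(x)+h(x)$ where $\Phi(x) := f(x,y^*(x))$ and $y^*(x) := \arg\min_{y\in\mathbb{R}^p} g(x,y)$, with $f,g:\mathbb{R}^d\times\mathbb{R}^p\to\mathbb{R}$ jointly continuously differentiable. Write $z=(x,y)$. Assumption A1: (1) $g(x,\cdot)$ is $\mu$-strongly convex for every $x$ ($\Phi$ may be nonconvex); (2) $h:\mathbb{R}^d\to\mathbb{R}\cup\{+\infty\}$ is proper and lower-semicontinuous (possibly nonsmooth and nonconvex); (3) $\Phi+h$ is bounded below and has bounded sub-level sets. Assumption A2: (1) $f$ is $M$-Lipschitz, and $\nabla f$ and $\nabla g$ are $L$-Lipschitz (in $z$); (2) the Jacobian $\nabla_x\nabla_y g$ is $\tau$-Lipschitz and the Hessian $\nabla_y^2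 g$ is $\rho$-Lipschitz (in $z$). Assumption A3: the function $(x,y)\mapsto\|y^T(x,y)-y^*(x)\|^2$ has nonempty limiting subdifferential $\partial_{(x,y)}$ at every point. Set $\kappa = L/\mu$, $L_\Phi = L + \frac{2L^2+\tau M^2}{\mu} + \frac{\rho L M + L^3 + \tau M L}{\mu^2} + \frac{\rho L^2 M}{\mu^3}$, and $\Gamma = 3L^2 + \frac{3\tau^2M^2}{\mu^2} + 6L^2(1+\sqrt{\kappa})^2\big(\kappa + \frac{\rho M}{\mu^2}\big)^2$. Proximal map: $\mathrm{prox}_{\beta h}(v) := \arg\min_u \{\beta h(u) + \frac12\|u-v\|^2\}$ (possibly set-valued). Algorithm PBA (proximal BiO-AIDm) with parameters $\alpha,\beta,\eta>0$, $T\in\mathbb{N}$, initial $x_0,y_0$: for $k=0,1,2,\dots$: set $y^0(x_k,y_k)=u_0=y_k$; for $t=1,\dots,T$: $u_t = y^{t-1}(x_k,y_k) - \alpha\nabla_y g(x_k, y^{t-1}(x_k,y_k))$, $y^t(x_k,y_k) = u_t + \eta(u_t - u_{t-1})$; set $y_{k+1} = y^T(x_k,y_k)$; compute $\widehat\nabla\Phi(x_k) = \nabla_x f(x_k,y_{k+1}) - \nabla_x\nabla_y g(x_k,y_{k+1})\hat v_k$ where $\hat v_k$ is the exact solution of $\nabla_y^2 g(x_k,y_{k+1})v = \nabla_y f(x_k,y_{k+1})$; update $x_{k+1}\in \mathrm{prox}_{\beta h}(x_k - \beta\widehat\nabla\Phi(x_k))$. For general $(x,y')$, $y^T(x,y')$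 denotes the output of the same $T$-step inner loop applied to $g(x,\cdot)$ with initial point $y'$. Potential function: $H(x,y') := \Phi(x)+h(x)+\frac78\|y^T(x,y')-y^*(x)\|^2$. Limiting subdifferential: the Fréchet subdifferential of $F$ at $x$ is $\widehat\partial F(x) = \{u: \liminf_{z\to x, z\ne x} \frac{F(z)-F(x)-u^\top(z-x)}{\|z-x\|}\ge 0\}$; the limiting subdifferential $\partial F(x)$ is the set of $u$ such that there exist $x_k\to x$ with $F(x_k)\to F(x)$ and $u_k\in\widehat\partial F(x_k)$ with $u_k\to u$; $\mathrm{dist}(\mathbf{0},S)=\inf_{u\in S}\|u\|$. *)

theory Defs
  imports "HOL-Analysis.Analysis" "HOL-Library.Extended_Real" "HOL-Library.Liminf_Limsup"
begin

definition grad :: "('v::real_inner \<Rightarrow> real) \<Rightarrow> 'v \<Rightarrow> 'v" where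
  "grad F z = (THE D. GDERIV F z :> D)"

definition grad_x :: "('a::real_inner \<times> 'b::real_inner \<Rightarrow> real) \<Rightarrow> 'a \<times> 'b \<Rightarrow> 'a" where
  "grad_x F z = fst (grad F z)"
definition grad_y :: "('a::real_inner \<times> 'b::real_inner \<Rightarrow> real) \<Rightarrow> 'a \<times> 'b \<Rightarrow> 'b" where
  "grad_y F z = snd (grad F z)"

definition hess_yy :: "('a::euclidean_space \<times> 'b::euclidean_space \<Rightarrow> real) \<Rightarrow> 'a \<times> 'b \<Rightarrow> 'b \<Rightarrow> 'b" where
  "hess_yy G z = frechet_derivative (\<lambda>y. grad_y G (fst z, y)) (at (snd z))"

(* Jacobian \<nabla>_x \<nabla>_y G (x,y) (a d x p matrix): the adjoint (transpose) of the
   derivative of x \<mapsto> \<nabla>_y G(x,y); so (\<nabla>_x\<nabla>_y G) v = \<nabla>_x <\<nabla>_y G(x,y), v> *)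
definition jac_xy :: "('a::euclidean_space \<times> 'b::euclidean_space \<Rightarrow> real) \<Rightarrow> 'a \<times> 'b \<Rightarrow> 'b \<Rightarrow> 'a" where
  "jac_xy G z = adjoint (frechet_derivative (\<lambda>x. grad_y G (x, snd z)) (at (fst z)))"

definition strongly_convex :: "real \<Rightarrow> ('b::real_normed_vector \<Rightarrow> real) \<Rightarrow> bool" where
  "strongly_convex \<mu> F \<longleftrightarrow> (\<forall>y y' u. 0 \<le> u \<and> u \<le> 1 \<longrightarrow>
     F (u *\<^sub>R y + (1 - u) *\<^sub>R y') \<le> u * F y + (1 - u) * F y' - \<mu> / 2 * u * (1 - u) * (norm (y - y'))\<^sup>2)"

definition ystar :: "('a \<times> 'b \<Rightarrow> real) \<Rightarrow> 'a \<Rightarrow> 'b" where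
  "ystar G x = (THE y. \<forall>y'. G (x, y) \<le> G (x, y'))"

definition Phi :: "('a \<times> 'b \<Rightarrow> real) \<Rightarrow> ('a \<times> 'b \<Rightarrow> real) \<Rightarrow> 'a \<Rightarrow> real" where
  "Phi F G x = F (x, ystar G x)"

fun inner_loop :: "('a::real_inner \<times> 'b::real_inner \<Rightarrow> real) \<Rightarrow> real \<Rightarrow> real \<Rightarrow> 'a \<Rightarrow> 'b \<Rightarrow> nat \<Rightarrow> 'b \<times> 'b" where
  "inner_loop G \<alpha> \<eta> x y' 0 = (y', y')"
| "inner_loop G \<alpha> \<eta> x y' (Suc t) =
     (let (u, y) = inner_loop G \<alpha> \<eta> x y' t;
          u' = y - \<alpha> *\<^sub>R grad_y G (x, y)
      in (u', u' + \<eta> *\<^sub>R (u' - u)))"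

definition yT :: "('a::real_inner \<times> 'b::real_inner \<Rightarrow> real) \<Rightarrow> real \<Rightarrow> real \<Rightarrow> nat \<Rightarrow> 'a \<Rightarrow> 'b \<Rightarrow> 'b" where
  "yT G \<alpha> \<eta> T x y' = snd (inner_loop G \<alpha> \<eta> x y' T)"

definition prox :: "real \<Rightarrow> ('a::real_normed_vector \<Rightarrow> ereal) \<Rightarrow> 'a \<Rightarrow> 'a set" where
  "prox \<beta> h v = {u. \<forall>w. ereal \<beta> * h u + ereal ((norm (u - v))\<^sup>2 / 2)
                         \<le> ereal \<beta> * h w + ereal ((norm (w - v))\<^sup>2 / 2)}"

definition frechet_subdiff :: "('v::real_inner \<Rightarrow> ereal) \<Rightarrow> 'v \<Rightarrow> 'v set" where
  "frechet_subdiff F x = {u. \<bar>F x\<bar> \<noteq> \<infinity> \<and>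
     Liminf (at x) (\<lambda>z. (F z - F x - ereal (u \<bullet> (z - x))) / ereal (norm (z - x))) \<ge> 0}"

definition limiting_subdiff :: "('v::real_inner \<Rightarrow> ereal) \<Rightarrow> 'v \<Rightarrow> 'v set" where
  "limiting_subdiff F x = {u. \<exists>xs us. xs \<longlonglongrightarrow> x \<and> (\<lambda>k. F (xs k)) \<longlonglongrightarrow> F x \<and>
       (\<forall>k. us k \<in> frechet_subdiff F (xs k)) \<and> us \<longlonglongrightarrow> u}"

(* dist(0,S) = inf_{u in S} ||u||  (= +infinity for S empty) *)
definition dist0 :: "'v::real_normed_vector set \<Rightarrow> ereal" where
  "dist0 S = (INF u\<in>S. ereal (norm u))"

definition potH :: "('a::real_inner \<times> 'b::real_inner \<Rightarrow> real) \<Rightarrow> ('a \<times> 'b \<Rightarrow> real) \<Rightarrow> ('a \<Rightarrow> ereal)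
     \<Rightarrow> real \<Rightarrow> real \<Rightarrow> nat \<Rightarrow> 'a \<times> 'b \<Rightarrow> ereal" where
  "potH F G h \<alpha> \<eta> T z = ereal (Phi F G (fst z)) + h (fst z)
      + ereal (7/8 * (norm (yT G \<alpha> \<eta> T (fst z) (snd z) - ystar G (fst z)))\<^sup>2)"

end

theory Submission
  imports Defs
begin

lemma grad_has_deriv:
  fixes F :: "'v::euclidean_space \<Rightarrow> real"
  assumes "F differentiable (at z)"
  shows "(F has_derivative (\<lambda>h. h \<bullet> grad F z)) (at z)"
proof -
  obtain D where D: "(F has_derivative D) (at z)" using assms differentiable_def by blast
  have lin: "linear D" using D has_derivative_linear by blast
  define v where "v = adjoint D 1"
  have Dv: "D = (\<lambda>h. h \<bullet> v)" unfolding v_def using adjoint_works[OF lin] by (auto simp: fun_eq_iff)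
  have G: "GDERIV F z :> v" using D Dv by (simp add: gderiv_def)
  have uniq: "v' = v" if "GDERIV F z :> v'" for v'
  proof -
    have "(\<lambda>h. h \<bullet> v') = (\<lambda>h. h \<bullet> v)"
      using has_derivative_unique that G by (auto simp: gderiv_def)
    then have "(v' - v) \<bullet> v' = (v'-v) \<bullet> v" by metis
    then have "(v' - v) \<bullet> (v' - v) = 0" by (simp add: inner_diff_right)
    then show ?thesis by simp
  qed
  have "grad F z = v" unfolding grad_def using G uniq by blast
  then show ?thesis using G by (simp add: gderiv_def)
qed



lemma partial_y_deriv:
  fixes F :: "'a::euclidean_space \<times> 'b::euclidean_space \<Rightarrow> real"
  assumes "F differentiable (at (x,y))"
  shows "((\<lambda>y. F (x,y)) has_derivative (\<lambda>k. k \<bullet> grad_y F (x,y))) (at y)"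
proof -
  have 1: "((\<lambda>y. (x,y)) has_derivative (\<lambda>k. (0,k))) (at y)"
    by (auto intro!: derivative_eq_intros)
  have 2: "(F has_derivative (\<lambda>h. h \<bullet> grad F (x,y))) (at (x,y))"
    using grad_has_deriv[OF assms] .
  have "((\<lambda>y. F (x,y)) has_derivative (\<lambda>k. (0,k) \<bullet> grad F (x,y))) (at y)"
    using has_derivative_compose[OF 1 2] by simp
  moreover have "(\<lambda>k. (0::'a,k) \<bullet> grad F (x,y)) = (\<lambda>k. k \<bullet> grad_y F (x,y))"
    by (auto simp: grad_y_def inner_prod_def fun_eq_iff split: prod.splits)
  ultimately show ?thesis by simp
qed

lemma partial_x_deriv:
  fixes F :: "'a::euclidean_space \<times> 'b::euclidean_space \<Rightarrow> real"
  assumes "F differentiable (at (x,y))"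
  shows "((\<lambda>x. F (x,y)) has_derivative (\<lambda>k. k \<bullet> grad_x F (x,y))) (at x)"
proof -
  have 1: "((\<lambda>x. (x,y)) has_derivative (\<lambda>k. (k,0))) (at x)"
    by (auto intro!: derivative_eq_intros)
  have 2: "(F has_derivative (\<lambda>h. h \<bullet> grad F (x,y))) (at (x,y))"
    using grad_has_deriv[OF assms] .
  have "((\<lambda>x. F (x,y)) has_derivative (\<lambda>k. (k,0) \<bullet> grad F (x,y))) (at x)"
    using has_derivative_compose[OF 1 2] by simp
  moreover have "(\<lambda>k. (k,0::'b) \<bullet> grad F (x,y)) = (\<lambda>k. k \<bullet> grad_x F (x,y))"
    by (auto simp: grad_x_def inner_prod_def fun_eq_iff split: prod.splits)
  ultimately show ?thesis by simp
qed

lemma grad_components: "grad F z = (grad_x F z, grad_y F z)"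
  by (simp add: grad_x_def grad_y_def)

lemma norm_le_comp: "norm (fst (z::'a::real_normed_vector \<times> 'b::real_normed_vector)) \<le> norm z" "norm (snd z) \<le> norm z"
  by (metis norm_fst_le prod.collapse, metis norm_snd_le prod.collapse)

lemma norm_pair_le: "norm ((a,b)::'a::real_normed_vector \<times> 'b::real_normed_vector) \<le> norm a + norm b"
  by (simp add: norm_Pair sqrt_sum_squares_le_sum)



locale bio =
  fixes f g :: "'a::euclidean_space \<times> 'b::euclidean_space \<Rightarrow> real"
    and \<mu> L M \<tau> \<rho> :: real
  assumes mu_pos: "\<mu> > 0" and L_pos: "L > 0" and muL: "\<mu> < L"
    and M_nn: "M \<ge> 0" and tau_nn: "\<tau> \<ge> 0" and rho_nn: "\<rho> \<ge> 0"
    and g_sc: "\<forall>x. strongly_convex \<mu> (\<lambda>y. g (x, y))"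
    and f_diff: "\<forall>z. f differentiable (at z)"
    and g_diff: "\<forall>z. g differentiable (at z)"
    and f_lip: "\<forall>z z'. \<bar>f z - f z'\<bar> \<le> M * dist z z'"
    and gradf_lip: "\<forall>z z'. norm (grad f z - grad f z') \<le> L * dist z z'"
    and gradg_lip: "\<forall>z z'. norm (grad g z - grad g z') \<le> L * dist z z'"
    and hess_diff: "\<forall>x y. (\<lambda>y. grad_y g (x, y)) differentiable (at y)"
    and jac_diff: "\<forall>x y. (\<lambda>x. grad_y g (x, y)) differentiable (at x)"
    and jac_lip: "\<forall>z z'. onorm (\<lambda>v. jac_xy g z v - jac_xy g z' v) \<le> \<tau> * dist z z'"
    and hess_lip: "\<forall>z z'. onorm (\<lambda>v. hess_yy g z v - hess_yy g z' v) \<le> \<rho> * dist z z'"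
begin

abbreviation gy where "gy x y \<equiv> grad_y g (x, y)"

lemma gy_lip: "norm (gy x y - gy x' y') \<le> L * dist (x,y) (x',y')"
proof -
  have "norm (gy x y - gy x' y') = norm (snd (grad g (x,y) - grad g (x',y')))"
    by (simp add: grad_y_def)
  also have "\<dots> \<le> norm (grad g (x,y) - grad g (x',y'))" using norm_le_comp(2) .
  also have "\<dots> \<le> L * dist (x,y) (x',y')" using gradg_lip by blast
  finally show ?thesis .
qed

lemma gy_lip_y: "norm (gy x y - gy x y') \<le> L * norm (y - y')"
  using gy_lip[of x y x y'] by (simp add: dist_Pair_Pair dist_norm)

lemma gy_lip_x: "norm (gy x y - gy x' y) \<le> L * norm (x - x')"
  using gy_lip[of x y x' y] by (simp add: dist_Pair_Pair dist_norm)

lemma gy_deriv: "((\<lambda>y. g (x,y)) has_derivative (\<lambda>k. k \<bullet> gy x y)) (at y)"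
  using partial_y_deriv g_diff by blast

lemma line_deriv:
  "((\<lambda>u. g (x, y + u *\<^sub>R d)) has_real_derivative (d \<bullet> gy x (y + t *\<^sub>R d))) (at t)"
proof -
  have 1: "((\<lambda>u. y + u *\<^sub>R d) has_derivative (\<lambda>u. u *\<^sub>R d)) (at t)"
    by (auto intro!: derivative_eq_intros)
  have "((\<lambda>u. g (x, y + u *\<^sub>R d)) has_derivative (\<lambda>u. (u *\<^sub>R d) \<bullet> gy x (y + t *\<^sub>R d))) (at t)"
    using has_derivative_compose[OF 1 gy_deriv] by simp
  moreover have "(\<lambda>u. (u *\<^sub>R d) \<bullet> gy x (y + t *\<^sub>R d)) = (*) (d \<bullet> gy x (y + t *\<^sub>R d))"
    by (auto simp: fun_eq_iff inner_commute)
  ultimately show ?thesis by (simp add: has_field_derivative_def)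
qed

lemma sc_first: "g (x,y') \<ge> g (x,y) + gy x y \<bullet> (y' - y) + \<mu>/2 * (norm (y' - y))\<^sup>2"
proof -
  define d where "d = y' - y"
  define \<phi> where "\<phi> u = g (x, y + u *\<^sub>R d)" for u
  have D: "(\<phi> has_real_derivative (d \<bullet> gy x y)) (at 0)"
    unfolding \<phi>_def using line_deriv[of x y d 0] by simp
  have q: "((\<lambda>u. (\<phi> (0 + u) - \<phi> 0) / u) \<longlongrightarrow> d \<bullet> gy x y) (at_right 0)"
    using D unfolding DERIV_def by (rule tendsto_mono[rotated]) (simp add: at_le)
  have r: "((\<lambda>u. \<phi> 1 - \<phi> 0 - \<mu>/2 * (1 - u) * (norm d)\<^sup>2) \<longlongrightarrow> \<phi> 1 - \<phi> 0 - \<mu>/2 * (1 - 0) * (norm d)\<^sup>2) (at_right 0)"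
    by (intro tendsto_intros)
  have ev: "eventually (\<lambda>u. (\<phi> (0 + u) - \<phi> 0) / u \<le> \<phi> 1 - \<phi> 0 - \<mu>/2 * (1 - u) * (norm d)\<^sup>2) (at_right 0)"
  proof -
    have "eventually (\<lambda>u. 0 < u \<and> u < (1::real)) (at_right 0)"
      by (simp add: eventually_at_right_field) (metis zero_less_one)
    then show ?thesis
    proof (rule eventually_mono)
      fix u :: real assume u: "0 < u \<and> u < 1"
      have sc: "g (x, u *\<^sub>R y' + (1 - u) *\<^sub>R y) \<le> u * g (x,y') + (1 - u) * g (x,y) - \<mu> / 2 * u * (1 - u) * (norm (y' - y))\<^sup>2"
        using g_sc u unfolding strongly_convex_def by auto
      have "u *\<^sub>R y' + (1 - u) *\<^sub>R y = y + u *\<^sub>R d" by (simp add: d_def algebra_simps)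
      then have "\<phi> u \<le> u * \<phi> 1 + (1 - u) * \<phi> 0 - \<mu> / 2 * u * (1 - u) * (norm d)\<^sup>2"
        using sc by (simp add: \<phi>_def d_def)
      then have "\<phi> u - \<phi> 0 \<le> u * (\<phi> 1 - \<phi> 0 - \<mu>/2 * (1 - u) * (norm d)\<^sup>2)"
        by (simp add: algebra_simps)
      then show "(\<phi> (0 + u) - \<phi> 0) / u \<le> \<phi> 1 - \<phi> 0 - \<mu>/2 * (1 - u) * (norm d)\<^sup>2"
        using u by (simp add: divide_le_eq mult.commute)
    qed
  qed
  have "d \<bullet> gy x y \<le> \<phi> 1 - \<phi> 0 - \<mu>/2 * (1 - 0) * (norm d)\<^sup>2"
    by (rule tendsto_le[OF _ r q ev]) simp
  then show ?thesis by (simp add: \<phi>_def d_def inner_commute)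
qed

lemma strong_mono: "(gy x y - gy x y') \<bullet> (y - y') \<ge> \<mu> * (norm (y - y'))\<^sup>2"
proof -
  have 1: "g (x,y') \<ge> g (x,y) + gy x y \<bullet> (y' - y) + \<mu>/2 * (norm (y' - y))\<^sup>2" by (rule sc_first)
  have 2: "g (x,y) \<ge> g (x,y') + gy x y' \<bullet> (y - y') + \<mu>/2 * (norm (y - y'))\<^sup>2" by (rule sc_first)
  have "norm (y' - y) = norm (y - y')" by (rule norm_minus_commute)
  moreover have "gy x y \<bullet> (y' - y) = - (gy x y \<bullet> (y - y'))" by (simp add: inner_diff_right)
  ultimately show ?thesis using 1 2 by (simp add: inner_diff_left)
qed

end


context bio begin

lemma descent: "g (x,y') \<le> g (x,y) + gy x y \<bullet> (y' - y) + L/2 * (norm (y' - y))\<^sup>2"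
proof -
  define d where "d = y' - y"
  define c where "c = d \<bullet> gy x y"
  define p where "p t = g (x, y + t *\<^sub>R d) - t * c - L/2 * t\<^sup>2 * (norm d)\<^sup>2" for t
  have "p 1 \<le> p 0"
  proof (rule DERIV_nonpos_imp_nonincreasing[of 0 1 p])
    fix t :: real assume t: "0 \<le> t" "t \<le> 1"
    have D: "DERIV p t :> d \<bullet> gy x (y + t *\<^sub>R d) - c - L/2 * (2 * t) * (norm d)\<^sup>2"
      unfolding p_def
      by (rule derivative_eq_intros line_deriv refl | simp)+
    have "d \<bullet> (gy x (y + t *\<^sub>R d) - gy x y) \<le> norm d * norm (gy x (y + t *\<^sub>R d) - gy x y)"
      by (rule norm_cauchy_schwarz)
    also have "\<dots> \<le> norm d * (L * norm (t *\<^sub>R d))"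
      using gy_lip_y[of x "y + t *\<^sub>R d" y] by (intro mult_left_mono) auto
    also have "\<dots> = L * t * (norm d)\<^sup>2" using t by (simp add: power2_eq_square)
    finally have "d \<bullet> gy x (y + t *\<^sub>R d) - c - L/2 * (2 * t) * (norm d)\<^sup>2 \<le> 0"
      by (simp add: c_def inner_diff_right)
    then show "\<exists>y. DERIV p t :> y \<and> y \<le> 0" using D by blast
  qed simp
  then show ?thesis by (simp add: p_def c_def d_def inner_commute)
qed

lemma cocoercive_aux:
  "g (x,y) \<ge> g (x,y0) + gy x y0 \<bullet> (y - y0) + (norm (gy x y - gy x y0))\<^sup>2 / (2*L)"
proof -
  define D where "D = gy x y - gy x y0"
  define w where "w = y - (1/L) *\<^sub>R D"
  have 1: "g (x,w) \<le> g (x,y) + gy x y \<bullet> (w - y) + L/2 * (norm (w - y))\<^sup>2" by (rule descent)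
  have 2: "g (x,w) \<ge> g (x,y0) + gy x y0 \<bullet> (w - y0) + \<mu>/2 * (norm (w - y0))\<^sup>2" by (rule sc_first)
  have 3: "\<mu>/2 * (norm (w - y0))\<^sup>2 \<ge> 0" using mu_pos by simp
  have e1: "gy x y \<bullet> (w - y) = - (gy x y \<bullet> D) / L" by (simp add: w_def)
  have e2: "(norm (w - y))\<^sup>2 = (D \<bullet> D) / L\<^sup>2"
  proof -
    have "w - y = (- 1/L) *\<^sub>R D" by (simp add: w_def)
    then have "(norm (w - y))\<^sup>2 = (1/L)\<^sup>2 * (norm D)\<^sup>2" using L_pos by (simp add: power_mult_distrib power_divide)
    then show ?thesis by (simp add: power2_norm_eq_inner power_divide)
  qed
  have e3: "gy x y0 \<bullet> (w - y0) = gy x y0 \<bullet> (y - y0) - (gy x y0 \<bullet> D) / L"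
    by (simp add: w_def inner_diff_right)
  have e4: "gy x y \<bullet> D - gy x y0 \<bullet> D = D \<bullet> D" by (simp add: D_def inner_diff_left)
  have h1: "L/2 * ((D \<bullet> D) / L\<^sup>2) = (D \<bullet> D)/(2*L)" using L_pos by (simp add: power2_eq_square)
  have a1: "g (x,w) \<le> g (x,y) - (gy x y \<bullet> D)/L + (D \<bullet> D)/(2*L)"
    using 1 e1 e2 h1 by simp
  have a2: "g (x,w) \<ge> g (x,y0) + gy x y0 \<bullet> (y - y0) - (gy x y0 \<bullet> D)/L"
    using 2 3 e3 by simp
  have h2: "(gy x y \<bullet> D)/L - (gy x y0 \<bullet> D)/L = (D \<bullet> D)/L" using e4 by (simp add: diff_divide_distrib[symmetric])
  have h3: "(D \<bullet> D)/L - (D \<bullet> D)/(2*L) = (D \<bullet> D)/(2*L)" by simp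
  have h4: "(norm (gy x y - gy x y0))\<^sup>2 = D \<bullet> D" by (simp add: D_def power2_norm_eq_inner)
  show ?thesis unfolding h4 using a1 a2 h2 h3 by linarith
qed

lemma cocoercive: "(gy x y - gy x y0) \<bullet> (y - y0) \<ge> (norm (gy x y - gy x y0))\<^sup>2 / L"
proof -
  have 1: "g (x,y) \<ge> g (x,y0) + gy x y0 \<bullet> (y - y0) + (norm (gy x y - gy x y0))\<^sup>2 / (2*L)"
    by (rule cocoercive_aux)
  have 2: "g (x,y0) \<ge> g (x,y) + gy x y \<bullet> (y0 - y) + (norm (gy x y0 - gy x y))\<^sup>2 / (2*L)"
    by (rule cocoercive_aux)
  have "norm (gy x y0 - gy x y) = norm (gy x y - gy x y0)" by (rule norm_minus_commute)
  moreover have "gy x y \<bullet> (y0 - y) = - (gy x y \<bullet> (y - y0))" by (simp add: inner_diff_right)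
  ultimately show ?thesis using 1 2 L_pos by (simp add: inner_diff_left field_simps)
qed

lemma nonexpansive:
  "norm ((y - (1/L) *\<^sub>R gy x y) - (y0 - (1/L) *\<^sub>R gy x y0)) \<le> norm (y - y0)"
proof -
  define D where "D = gy x y - gy x y0"
  define d where "d = y - y0"
  have c: "D \<bullet> d \<ge> (D \<bullet> D) / L" using cocoercive[of x y y0]
    by (simp add: D_def d_def power2_norm_eq_inner)
  have eq: "(y - (1/L) *\<^sub>R gy x y) - (y0 - (1/L) *\<^sub>R gy x y0) = d - (1/L) *\<^sub>R D"
    by (simp add: D_def d_def algebra_simps)
  have "(norm (d - (1/L) *\<^sub>R D))\<^sup>2 = d \<bullet> d - 2/L * (D \<bullet> d) + (D \<bullet> D) / L\<^sup>2"
    unfolding power2_norm_eq_inner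
    by (simp add: inner_diff_left inner_diff_right inner_commute power2_eq_square algebra_simps)
  moreover have "2/L * (D \<bullet> d) \<ge> 2/L * ((D \<bullet> D) / L)"
    using c L_pos by (intro mult_left_mono) auto
  moreover have "(D \<bullet> D) / L\<^sup>2 = 1/L * ((D \<bullet> D) / L)" by (simp add: power2_eq_square)
  moreover have "1/L * ((D \<bullet> D) / L) \<ge> 0" using L_pos by simp
  moreover have "2/L * ((D \<bullet> D) / L) = 2 * (1/L * ((D \<bullet> D) / L))" by simp
  ultimately have "(norm (d - (1/L) *\<^sub>R D))\<^sup>2 \<le> (norm d)\<^sup>2"
    unfolding power2_norm_eq_inner by linarith
  then show ?thesis unfolding eq by (simp add: d_def power2_le_iff_abs_le)
qed

end


context bio begin

lemma zero_exists: "\<exists>y0. gy x y0 = 0"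
proof -
  define N where "N y = y - (\<mu>/L\<^sup>2) *\<^sub>R gy x y" for y
  define c where "c = sqrt (1 - \<mu>\<^sup>2/L\<^sup>2)"
  have ml: "\<mu>\<^sup>2/L\<^sup>2 < 1" using mu_pos muL L_pos by (simp add: power_strict_mono divide_less_eq)
  have ml0: "\<mu>\<^sup>2/L\<^sup>2 > 0" using mu_pos L_pos by simp
  have c0: "0 \<le> c" "c < 1" unfolding c_def using ml ml0 by (auto simp: real_sqrt_lt_1_iff)
  have lip: "dist (N y) (N y') \<le> c * dist y y'" for y y'
  proof -
    define D where "D = gy x y - gy x y'"
    define d where "d = y - y'"
    have m: "D \<bullet> d \<ge> \<mu> * (d \<bullet> d)" using strong_mono[where x=x and y=y and y'=y'] by (simp add: D_def d_def power2_norm_eq_inner)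
    have l: "D \<bullet> D \<le> L\<^sup>2 * (d \<bullet> d)"
    proof -
      have "norm D \<le> L * norm d" using gy_lip_y[of x y y'] by (simp add: D_def d_def)
      then have "(norm D)\<^sup>2 \<le> (L * norm d)\<^sup>2" by (simp add: power_mono)
      then show ?thesis by (simp add: power2_norm_eq_inner power_mult_distrib)
    qed
    have eq: "N y - N y' = d - (\<mu>/L\<^sup>2) *\<^sub>R D" by (simp add: N_def D_def d_def algebra_simps)
    have "(norm (N y - N y'))\<^sup>2 = d \<bullet> d - 2 * (\<mu>/L\<^sup>2) * (D \<bullet> d) + (\<mu>/L\<^sup>2)\<^sup>2 * (D \<bullet> D)"
      unfolding eq power2_norm_eq_inner
      by (simp add: inner_diff_left inner_diff_right inner_commute power2_eq_square algebra_simps)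
    also have "\<dots> \<le> d \<bullet> d - 2 * (\<mu>/L\<^sup>2) * (\<mu> * (d \<bullet> d)) + (\<mu>/L\<^sup>2)\<^sup>2 * (L\<^sup>2 * (d \<bullet> d))"
      using m l mu_pos L_pos
      by (intro add_mono diff_mono mult_left_mono) auto
    also have "\<dots> = c\<^sup>2 * (d \<bullet> d)" using ml L_pos unfolding c_def
      by (simp add: power2_eq_square field_simps)
    also have "\<dots> = (c * norm d)\<^sup>2" by (simp add: power2_norm_eq_inner power_mult_distrib)
    finally have "(norm (N y - N y'))\<^sup>2 \<le> (c * norm d)\<^sup>2" .
    then have "norm (N y - N y') \<le> c * norm d" using c0 by (simp add: power2_le_iff_abs_le)
    then show ?thesis by (simp add: dist_norm d_def)
  qed
  obtain y0 where "N y0 = y0" using banach_fix_type[OF c0 ] lip by blast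
  then have "(\<mu>/L\<^sup>2) *\<^sub>R gy x y0 = 0" by (simp add: N_def)
  then show ?thesis using mu_pos L_pos by auto
qed

lemma ystar_char: assumes "gy x y0 = 0" shows "ystar g x = y0"
proof -
  have min: "\<forall>y'. g (x,y0) \<le> g (x,y')"
  proof
    fix y'
    have "g (x,y') \<ge> g (x,y0) + gy x y0 \<bullet> (y' - y0) + \<mu>/2 * (norm (y' - y0))\<^sup>2" by (rule sc_first)
    then show "g (x,y0) \<le> g (x,y')" using assms mu_pos
      by (smt (verit, ccfv_SIG) inner_zero_left mult_nonneg_nonneg zero_le_power2 divide_nonneg_pos)
  qed
  have uniq: "y1 = y0" if "\<forall>y'. g (x,y1) \<le> g (x,y')" for y1
  proof -
    have "g (x,y1) \<ge> g (x,y0) + gy x y0 \<bullet> (y1 - y0) + \<mu>/2 * (norm (y1 - y0))\<^sup>2" by (rule sc_first)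
    moreover have "g (x,y1) \<le> g (x,y0)" using that by blast
    ultimately have "\<mu>/2 * (norm (y1 - y0))\<^sup>2 \<le> 0" using assms by simp
    then have "(norm (y1 - y0))\<^sup>2 \<le> 0" using mu_pos by (simp add: mult_le_0_iff)
    then show ?thesis by simp
  qed
  show ?thesis unfolding ystar_def using min uniq by (rule the_equality)
qed

lemma ystar_zero: "gy x (ystar g x) = 0"
  using zero_exists ystar_char by metis

definition kappa where "kappa = L / \<mu>"

lemma kappa_gt1: "kappa > 1" using muL mu_pos by (simp add: kappa_def)

lemma ystar_lip: "norm (ystar g x - ystar g x') \<le> kappa * norm (x - x')"
proof -
  define a where "a = ystar g x"
  define b where "b = ystar g x'"
  have "\<mu> * (norm (a - b))\<^sup>2 \<le> (gy x a - gy x b) \<bullet> (a - b)" by (rule strong_mono)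
  also have "gy x a - gy x b = gy x' b - gy x b" using ystar_zero a_def b_def by simp
  also have "(gy x' b - gy x b) \<bullet> (a - b) \<le> norm (gy x' b - gy x b) * norm (a - b)"
    by (rule norm_cauchy_schwarz)
  also have "\<dots> \<le> L * norm (x' - x) * norm (a - b)"
    using gy_lip_x[of x' b x] by (intro mult_right_mono) auto
  finally have 1: "\<mu> * (norm (a - b))\<^sup>2 \<le> L * norm (x' - x) * norm (a - b)" .
  show ?thesis
  proof (cases "norm (a - b) = 0")
    case True then show ?thesis using kappa_gt1 by (simp add: a_def b_def)
  next
    case False
    then have "\<mu> * norm (a - b) \<le> L * norm (x' - x)" using 1
      by (simp add: power2_eq_square mult.assoc[symmetric])
    then show ?thesis using mu_pos unfolding kappa_def a_def b_def
      by (simp add: norm_minus_commute field_simps)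
  qed
qed

end


context bio begin

lemma loop_suc:
  "fst (inner_loop G a e x y' (Suc t)) = snd (inner_loop G a e x y' t) - a *\<^sub>R grad_y G (x, snd (inner_loop G a e x y' t))"
  "snd (inner_loop G a e x y' (Suc t)) = fst (inner_loop G a e x y' (Suc t)) + e *\<^sub>R (fst (inner_loop G a e x y' (Suc t)) - fst (inner_loop G a e x y' t))"
  by (simp_all add: Let_def split_def)

lemma loop_lip_aux:
  fixes x xx :: 'a and y' yy :: 'b
  assumes eta: "0 \<le> \<eta>" "\<eta> \<le> 1"
  defines "U \<equiv> \<lambda>t. fst (inner_loop g (1/L) \<eta> x y' t)"
    and "Y \<equiv> \<lambda>t. snd (inner_loop g (1/L) \<eta> x y' t)"
    and "U2 \<equiv> \<lambda>t. fst (inner_loop g (1/L) \<eta> xx yy t)"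
    and "Y2 \<equiv> \<lambda>t. snd (inner_loop g (1/L) \<eta> xx yy t)"
    and "d \<equiv> norm (y' - yy)" and "e \<equiv> norm (x - xx)"
  defines "K \<equiv> 6/5 * d + 3/2 * e"
  shows "norm (U (Suc t) - U2 (Suc t)) + e/2 \<le> (5/2)^t * K \<and>
         norm (Y (Suc t) - Y2 (Suc t)) + 3/2 * e \<le> (5/2)^(Suc t) * K"
proof -
  have stepU: "norm (U (Suc t) - U2 (Suc t)) \<le> norm (Y t - Y2 t) + e" for t
  proof -
    have "U (Suc t) - U2 (Suc t) = ((Y t - (1/L) *\<^sub>R gy x (Y t)) - (Y2 t - (1/L) *\<^sub>R gy x (Y2 t)))
            + (1/L) *\<^sub>R (gy xx (Y2 t) - gy x (Y2 t))"
      unfolding U_def Y_def U2_def Y2_def loop_suc by (simp add: algebra_simps)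
    also have "norm \<dots> \<le> norm (Y t - Y2 t) + (1/L) * norm (gy xx (Y2 t) - gy x (Y2 t))"
      using nonexpansive[of "Y t" x "Y2 t"] L_pos
      by (intro order_trans[OF norm_triangle_ineq] add_mono) auto
    also have "(1/L) * norm (gy xx (Y2 t) - gy x (Y2 t)) \<le> (1/L) * (L * norm (xx - x))"
      using gy_lip_x L_pos by (intro mult_left_mono) auto
    also have "\<dots> = e" using L_pos by (simp add: e_def norm_minus_commute)
    finally show ?thesis by simp
  qed
  have stepY: "norm (Y (Suc t) - Y2 (Suc t)) \<le> 2 * norm (U (Suc t) - U2 (Suc t)) + norm (U t - U2 t)" for t
  proof -
    have "Y (Suc t) - Y2 (Suc t) = (1 + \<eta>) *\<^sub>R (U (Suc t) - U2 (Suc t)) - \<eta> *\<^sub>R (U t - U2 t)"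
      unfolding U_def Y_def U2_def Y2_def by (subst (1 2) loop_suc(2)) (simp add: algebra_simps)
    also have "norm \<dots> \<le> (1 + \<eta>) * norm (U (Suc t) - U2 (Suc t)) + \<eta> * norm (U t - U2 t)"
      using eta by (intro order_trans[OF norm_triangle_ineq4]) simp
    also have "\<dots> \<le> 2 * norm (U (Suc t) - U2 (Suc t)) + norm (U t - U2 t)"
      using eta by (intro add_mono mult_right_mono) (auto intro: mult_left_le_one_le)
    finally show ?thesis .
  qed
  have U0: "U 0 = y'" "U2 0 = yy" "Y 0 = y'" "Y2 0 = yy" by (simp_all add: U_def U2_def Y_def Y2_def)
  have e0: "e \<ge> 0" "d \<ge> 0" by (simp_all add: e_def d_def)
  show ?thesis
  proof (induction t)
    case 0
    have a: "norm (U 1 - U2 1) \<le> d + e" using stepU[of 0] U0 by (simp add: d_def)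
    have b: "norm (Y 1 - Y2 1) \<le> 2 * (d + e) + d" using stepY[of 0] U0 a by (simp add: d_def)
    show ?case using a b e0 by (simp add: K_def)
  next
    case (Suc t)
    have a: "norm (U (Suc (Suc t)) - U2 (Suc (Suc t))) + e/2 \<le> (5/2)^(Suc t) * K"
      using stepU[of "Suc t"] Suc by simp
    have K0: "K \<ge> 0" using e0 by (simp add: K_def)
    have P1: "(5/2::real)^(Suc t) * K = 5/2 * ((5/2)^t*K)" by simp
    have P2: "(5/2::real)^(Suc (Suc t)) * K = 25/4 * ((5/2)^t*K)" by simp
    have P0: "(5/2::real)^t*K \<ge> 0" using K0 by simp
    have b: "norm (Y (Suc (Suc t)) - Y2 (Suc (Suc t))) \<le> 6*((5/2)^t*K) - 3/2*e"
      using stepY[of "Suc t"] a Suc P1 by linarith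
    show ?case using a b P2 P0 by linarith
  qed
qed

lemma loop_lip:
  assumes eta: "0 \<le> \<eta>" "\<eta> \<le> 1"
  shows "norm (yT g (1/L) \<eta> T x y' - yT g (1/L) \<eta> T xx yy) \<le> (5/2)^T * (6/5 * norm (y' - yy) + 3/2 * norm (x - xx))"
proof (cases T)
  case 0
  have n: "norm (y' - yy) \<ge> 0" "norm (x - xx) \<ge> 0" by simp_all
  show ?thesis apply (simp add: yT_def 0) using n by linarith
next
  case (Suc t)
  have n: "norm (x - xx) \<ge> 0" by simp
  show ?thesis using n loop_lip_aux[OF eta, where x=x and y'=y' and xx=xx and yy=yy and t=t] unfolding yT_def Suc
    by linarith
qed

end


lemma line_deriv_gen:
  fixes F :: "'v::real_inner \<Rightarrow> real"
  assumes "\<And>y. (F has_derivative (\<lambda>k. k \<bullet> Gr y)) (at y)"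
  shows "((\<lambda>s. F (p + s *\<^sub>R d)) has_real_derivative (d \<bullet> Gr (p + t *\<^sub>R d))) (at t)"
proof -
  have 1: "((\<lambda>u. p + u *\<^sub>R d) has_derivative (\<lambda>u. u *\<^sub>R d)) (at t)"
    by (auto intro!: derivative_eq_intros)
  have "((\<lambda>u. F (p + u *\<^sub>R d)) has_derivative (\<lambda>u. (u *\<^sub>R d) \<bullet> Gr (p + t *\<^sub>R d))) (at t)"
    using has_derivative_compose[OF 1 assms] by simp
  moreover have "(\<lambda>u. (u *\<^sub>R d) \<bullet> Gr (p + t *\<^sub>R d)) = (*) (d \<bullet> Gr (p + t *\<^sub>R d))"
    by (auto simp: fun_eq_iff)
  ultimately show ?thesis by (simp add: has_field_derivative_def)
qed

lemma lin_est:
  fixes Gr :: "'v::real_normed_vector \<Rightarrow> 'w::real_normed_vector"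
  assumes der: "\<And>y. (Gr has_derivative Hs y) (at y)"
    and lip: "\<And>y y'. onorm (\<lambda>v. Hs y v - Hs y' v) \<le> R * norm (y - y')"
    and R0: "R \<ge> 0" and a: "norm (a - y0) \<le> r" and b: "norm (b - y0) \<le> r"
  shows "norm (Gr b - Gr a - Hs y0 (b - a)) \<le> norm (b - a) * (R * r)"
proof (rule differentiable_bound_linearization[where S="cball y0 r"])
  fix t :: real assume t: "t \<in> {0..1}"
  have "a + t *\<^sub>R (b - a) = (1 - t) *\<^sub>R a + t *\<^sub>R b" by (simp add: algebra_simps)
  moreover have "convex (cball y0 r)" by simp
  moreover have "a \<in> cball y0 r" "b \<in> cball y0 r" using a b by (simp_all add: dist_norm norm_minus_commute)
  ultimately show "a + t *\<^sub>R (b - a) \<in> cball y0 r" using t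
    by (metis atLeastAtMost_iff convexD_alt)
next
  fix x assume "x \<in> cball y0 r"
  then show "(Gr has_derivative Hs x) (at x within cball y0 r)" using der has_derivative_at_withinI by blast
next
  fix x assume x: "x \<in> cball y0 r"
  have "onorm (Hs x - Hs y0) = onorm (\<lambda>v. Hs x v - Hs y0 v)" by (simp add: fun_diff_def)
  also have "\<dots> \<le> R * norm (x - y0)" by (rule lip)
  also have "\<dots> \<le> R * r" using x R0 by (intro mult_left_mono) (auto simp: dist_norm norm_minus_commute)
  finally show "onorm (Hs x - Hs y0) \<le> R * r" .
next
  show "y0 \<in> cball y0 r" using a by simp (metis norm_ge_zero order_trans)
qed

lemma sym_est:
  fixes F :: "'v::real_inner \<Rightarrow> real"
  assumes dF: "\<And>y. (F has_derivative (\<lambda>k. k \<bullet> Gr y)) (at y)"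
    and der: "\<And>y. (Gr has_derivative Hs y) (at y)"
    and lip: "\<And>y y'. onorm (\<lambda>v. Hs y v - Hs y' v) \<le> R * norm (y - y')"
    and R0: "R \<ge> 0" and lin: "\<And>y. linear (Hs y)" and h: "h > 0"
  shows "\<bar>F (y0 + h *\<^sub>R u + h *\<^sub>R v) - F (y0 + h *\<^sub>R u) - F (y0 + h *\<^sub>R v) + F y0 - h\<^sup>2 * (u \<bullet> Hs y0 v)\<bar>
     \<le> h * (norm u * (norm v * h * (R * (h * (norm u + norm v)))))"
proof -
  define k where "k s = F (y0 + h *\<^sub>R v + s *\<^sub>R u) - F (y0 + s *\<^sub>R u)" for s
  define k' where "k' s = u \<bullet> Gr (y0 + h *\<^sub>R v + s *\<^sub>R u) - u \<bullet> Gr (y0 + s *\<^sub>R u)" for s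
  have D: "DERIV k s :> k' s" for s
    unfolding k_def k'_def
    by (intro derivative_intros line_deriv_gen[OF dF])
  have "\<exists>l z. 0 < z \<and> z < h \<and> DERIV k z :> l \<and> k h - k 0 = (h - 0) * l"
  proof -
    have cont: "continuous_on {0..h} k"
      by (meson D DERIV_isCont continuous_at_imp_continuous_on)
    have dif: "k differentiable (at x)" for x using D real_differentiable_def by blast
    show ?thesis by (rule MVT[OF h cont dif])
  qed
  then obtain l z where z: "0 < z" "z < h" and lz: "DERIV k z :> l" and kz0: "k h - k 0 = (h - 0) * l"
    by blast
  have "l = k' z" using DERIV_unique[OF lz D] .
  then have kz: "k h - k 0 = h * k' z" using kz0 by simp
  define a where "a = y0 + z *\<^sub>R u"
  define b where "b = y0 + h *\<^sub>R v + z *\<^sub>R u"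
  have na: "norm (a - y0) \<le> h * (norm u + norm v)" using z
    by (simp add: a_def algebra_simps mult_right_mono add_increasing2)
  have nb: "norm (b - y0) \<le> h * (norm u + norm v)"
  proof -
    have "norm (b - y0) = norm (h *\<^sub>R v + z *\<^sub>R u)" by (simp add: b_def)
    also have "\<dots> \<le> norm (h *\<^sub>R v) + norm (z *\<^sub>R u)" by (rule norm_triangle_ineq)
    also have "\<dots> \<le> h * norm v + h * norm u" using z h by (simp add: mult_right_mono)
    finally show ?thesis by (simp add: algebra_simps)
  qed
  have e: "norm (Gr b - Gr a - Hs y0 (b - a)) \<le> norm (b - a) * (R * (h * (norm u + norm v)))"
    by (rule lin_est[OF der lip R0 na nb])
  have ba: "b - a = h *\<^sub>R v" by (simp add: a_def b_def)
  have "\<bar>k' z - h * (u \<bullet> Hs y0 v)\<bar> = \<bar>u \<bullet> (Gr b - Gr a - Hs y0 (b - a))\<bar>"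
    unfolding k'_def ba using linear_cmul[OF lin] by (simp add: a_def b_def inner_diff_right)
  also have "\<dots> \<le> norm u * norm (Gr b - Gr a - Hs y0 (b - a))" by (rule Cauchy_Schwarz_ineq2)
  also have "\<dots> \<le> norm u * (norm v * h * (R * (h * (norm u + norm v))))"
    using e h unfolding ba by (intro mult_left_mono) (auto simp: mult.commute)
  finally have 1: "\<bar>k' z - h * (u \<bullet> Hs y0 v)\<bar> \<le> norm u * (norm v * h * (R * (h * (norm u + norm v))))" .
  have "k h - k 0 - h\<^sup>2 * (u \<bullet> Hs y0 v) = h * (k' z - h * (u \<bullet> Hs y0 v))"
    using kz by (simp add: power2_eq_square algebra_simps)
  moreover have "k h - k 0 = F (y0 + h *\<^sub>R u + h *\<^sub>R v) - F (y0 + h *\<^sub>R u) - F (y0 + h *\<^sub>R v) + F y0"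
    by (simp add: k_def algebra_simps)
  ultimately have "\<bar>F (y0 + h *\<^sub>R u + h *\<^sub>R v) - F (y0 + h *\<^sub>R u) - F (y0 + h *\<^sub>R v) + F y0 - h\<^sup>2 * (u \<bullet> Hs y0 v)\<bar>
     = h * \<bar>k' z - h * (u \<bullet> Hs y0 v)\<bar>" using h by (simp add: abs_mult)
  also have "\<dots> \<le> h * (norm u * (norm v * h * (R * (h * (norm u + norm v)))))"
    using 1 h by (intro mult_left_mono) auto
  finally show ?thesis .
qed


lemma hess_sym_gen:
  fixes F :: "'v::real_inner \<Rightarrow> real"
  assumes dF: "\<And>y. (F has_derivative (\<lambda>k. k \<bullet> Gr y)) (at y)"
    and der: "\<And>y. (Gr has_derivative Hs y) (at y)"
    and lip: "\<And>y y'. onorm (\<lambda>v. Hs y v - Hs y' v) \<le> R * norm (y - y')"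
    and R0: "R \<ge> 0" and lin: "\<And>y. linear (Hs y)"
  shows "u \<bullet> Hs y0 v = v \<bullet> Hs y0 u"
proof -
  define C where "C = R * norm u * norm v * (norm u + norm v)"
  have C0: "C \<ge> 0" using R0 by (simp add: C_def)
  have bnd: "\<bar>u \<bullet> Hs y0 v - v \<bullet> Hs y0 u\<bar> \<le> 2 * h * C" if h: "h > 0" for h
  proof -
    define \<Delta> where "\<Delta> = F (y0 + h *\<^sub>R u + h *\<^sub>R v) - F (y0 + h *\<^sub>R u) - F (y0 + h *\<^sub>R v) + F y0"
    have 1: "\<bar>\<Delta> - h\<^sup>2 * (u \<bullet> Hs y0 v)\<bar> \<le> h * (norm u * (norm v * h * (R * (h * (norm u + norm v)))))"
      unfolding \<Delta>_def by (rule sym_est[OF dF der lip R0 lin h])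
    have 2: "\<bar>\<Delta> - h\<^sup>2 * (v \<bullet> Hs y0 u)\<bar> \<le> h * (norm v * (norm u * h * (R * (h * (norm v + norm u)))))"
    proof -
      have "\<Delta> = F (y0 + h *\<^sub>R v + h *\<^sub>R u) - F (y0 + h *\<^sub>R v) - F (y0 + h *\<^sub>R u) + F y0"
        unfolding \<Delta>_def by (simp add: add_ac)
      then show ?thesis using sym_est[OF dF der lip R0 lin h, of y0 v u] by simp
    qed
    have e: "h * (norm u * (norm v * h * (R * (h * (norm u + norm v))))) = h\<^sup>2 * (h * C)"
      "h * (norm v * (norm u * h * (R * (h * (norm v + norm u))))) = h\<^sup>2 * (h * C)"
      by (simp_all add: C_def power2_eq_square algebra_simps)
    have "h\<^sup>2 * \<bar>u \<bullet> Hs y0 v - v \<bullet> Hs y0 u\<bar> = \<bar>(\<Delta> - h\<^sup>2 * (v \<bullet> Hs y0 u)) - (\<Delta> - h\<^sup>2 * (u \<bullet> Hs y0 v))\<bar>"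
    proof -
      have "h\<^sup>2 * \<bar>u \<bullet> Hs y0 v - v \<bullet> Hs y0 u\<bar> = \<bar>h\<^sup>2 * (u \<bullet> Hs y0 v - v \<bullet> Hs y0 u)\<bar>"
        by (simp add: abs_mult)
      then show ?thesis by (simp add: algebra_simps)
    qed
    also have "\<dots> \<le> \<bar>\<Delta> - h\<^sup>2 * (v \<bullet> Hs y0 u)\<bar> + \<bar>\<Delta> - h\<^sup>2 * (u \<bullet> Hs y0 v)\<bar>"
      by (rule abs_triangle_ineq4)
    also have "\<dots> \<le> h\<^sup>2 * (h * C) + h\<^sup>2 * (h * C)" using 1 2 unfolding e by (rule add_mono[rotated])
    also have "\<dots> = h\<^sup>2 * (2 * h * C)" by (simp add: algebra_simps)
    finally show ?thesis using h by simp
  qed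
  have "\<bar>u \<bullet> Hs y0 v - v \<bullet> Hs y0 u\<bar> \<le> 0 + e" if e: "e > 0" for e
  proof -
    have "\<bar>u \<bullet> Hs y0 v - v \<bullet> Hs y0 u\<bar> \<le> 2 * (e / (2 * C + 1)) * C"
      using bnd[of "e / (2 * C + 1)"] e C0 by (simp add: add_nonneg_pos)
    also have "\<dots> \<le> e" using e C0 by (simp add: field_simps)
    finally show ?thesis by simp
  qed
  then have "\<bar>u \<bullet> Hs y0 v - v \<bullet> Hs y0 u\<bar> \<le> 0" by (rule field_le_epsilon)
  then show ?thesis by simp
qed



lemma deriv_bound_lip:
  fixes F :: "'c::real_normed_vector \<Rightarrow> 'd::real_normed_vector"
  assumes D: "(F has_derivative D) (at p)"
    and lip: "\<And>a b. norm (F a - F b) \<le> c * norm (a - b)"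
  shows "norm (D v) \<le> c * norm v"
proof (cases "v = 0")
  case True
  have "linear D" using D has_derivative_linear by blast
  then show ?thesis using True by (simp add: linear_0)
next
  case False
  have bl: "bounded_linear D" using D has_derivative_bounded_linear by blast
  have nv: "norm v > 0" using False by simp
  show ?thesis
  proof (rule field_le_epsilon)
    fix e :: real assume e: "e > 0"
    define e1 where "e1 = e / norm v"
    have e1: "e1 > 0" using e nv by (simp add: e1_def)
    obtain d where d: "d > 0" and dd: "\<And>y. norm (y - p) < d \<Longrightarrow> norm (F y - F p - D (y - p)) \<le> e1 * norm (y - p)"
      using D e1 unfolding has_derivative_at_alt by blast
    define t where "t = d / (2 * norm v)"
    have t: "t > 0" using d nv by (simp add: t_def)
    have "norm ((p + t *\<^sub>R v) - p) = t * norm v" using t by simp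
    also have "\<dots> < d" using d nv by (simp add: t_def)
    finally have r: "norm (F (p + t *\<^sub>R v) - F p - D (t *\<^sub>R v)) \<le> e1 * (t * norm v)"
      using dd[of "p + t *\<^sub>R v"] t by simp
    have "t * norm (D v) = norm (D (t *\<^sub>R v))" using t linear_cmul[OF bounded_linear.linear[OF bl]] by simp
    also have "\<dots> \<le> norm (F (p + t *\<^sub>R v) - F p) + norm (F (p + t *\<^sub>R v) - F p - D (t *\<^sub>R v))"
      using norm_triangle_ineq4[of "F (p + t *\<^sub>R v) - F p" "F (p + t *\<^sub>R v) - F p - D (t *\<^sub>R v)"] by simp
    also have "\<dots> \<le> c * (t * norm v) + e1 * (t * norm v)"
      using lip[of "p + t *\<^sub>R v" p] r t by (intro add_mono) auto
    finally have "t * norm (D v) \<le> t * (c * norm v + e)"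
      using nv by (simp add: e1_def algebra_simps)
    then show "norm (D v) \<le> c * norm v + e" using t by simp
  qed
qed

lemma deriv_mono:
  fixes F :: "'c::real_inner \<Rightarrow> 'c"
  assumes D: "(F has_derivative D) (at p)"
    and mono: "\<And>a b. (F a - F b) \<bullet> (a - b) \<ge> m * (norm (a - b))\<^sup>2"
  shows "D v \<bullet> v \<ge> m * (norm v)\<^sup>2"
proof (cases "v = 0")
  case True
  have "linear D" using D has_derivative_linear by blast
  then show ?thesis using True by (simp add: linear_0)
next
  case False
  have bl: "bounded_linear D" using D has_derivative_bounded_linear by blast
  have nv: "norm v > 0" using False by simp
  have "m * (norm v)\<^sup>2 \<le> D v \<bullet> v + e" if e: "e > 0" for e
  proof -
    define e1 where "e1 = e / (norm v)\<^sup>2"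
    have e1: "e1 > 0" using e nv by (simp add: e1_def)
    obtain d where d: "d > 0" and dd: "\<And>y. norm (y - p) < d \<Longrightarrow> norm (F y - F p - D (y - p)) \<le> e1 * norm (y - p)"
      using D e1 unfolding has_derivative_at_alt by blast
    define t where "t = d / (2 * norm v)"
    have t: "t > 0" using d nv by (simp add: t_def)
    have "norm ((p + t *\<^sub>R v) - p) = t * norm v" using t by simp
    also have "\<dots> < d" using d nv by (simp add: t_def)
    finally have r: "norm (F (p + t *\<^sub>R v) - F p - D (t *\<^sub>R v)) \<le> e1 * (t * norm v)"
      using dd[of "p + t *\<^sub>R v"] t by simp
    define R where "R = F (p + t *\<^sub>R v) - F p - D (t *\<^sub>R v)"
    have Dt: "D (t *\<^sub>R v) = t *\<^sub>R D v" using linear_cmul[OF bounded_linear.linear[OF bl]] by simp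
    have "m * (norm (t *\<^sub>R v))\<^sup>2 \<le> (F (p + t *\<^sub>R v) - F p) \<bullet> (t *\<^sub>R v)"
      using mono[of "p + t *\<^sub>R v" p] by simp
    also have "(F (p + t *\<^sub>R v) - F p) = t *\<^sub>R D v + R" by (simp add: R_def Dt)
    also have "(t *\<^sub>R D v + R) \<bullet> (t *\<^sub>R v) = t\<^sup>2 * (D v \<bullet> v) + t * (R \<bullet> v)"
      by (simp add: inner_add_left power2_eq_square algebra_simps)
    also have "t * (R \<bullet> v) \<le> t * (norm R * norm v)"
      using t by (intro mult_left_mono) (auto simp: norm_cauchy_schwarz)
    also have "t * (norm R * norm v) \<le> t * (e1 * (t * norm v) * norm v)"
      using t r by (intro mult_left_mono mult_right_mono) (auto simp: R_def)
    also have "t * (e1 * (t * norm v) * norm v) = t\<^sup>2 * e"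
      using nv by (simp add: e1_def power2_eq_square)
    finally have "t\<^sup>2 * (m * (norm v)\<^sup>2) \<le> t\<^sup>2 * (D v \<bullet> v + e)"
      using t by (simp add: power_mult_distrib algebra_simps)
    then show ?thesis using t by simp
  qed
  then show ?thesis by (rule field_le_epsilon)
qed

lemma adjoint_bound:
  fixes A :: "'n::euclidean_space \<Rightarrow> 'm::euclidean_space"
  assumes lin: "linear A" and b: "\<And>v. norm (A v) \<le> c * norm v" and c0: "c \<ge> 0"
  shows "norm (adjoint A w) \<le> c * norm w"
proof -
  define a where "a = adjoint A w"
  have "(norm a)\<^sup>2 = A a \<bullet> w" using adjoint_works[OF lin, of a w] by (simp add: a_def power2_norm_eq_inner)
  also have "\<dots> \<le> norm (A a) * norm w" by (rule norm_cauchy_schwarz)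
  also have "\<dots> \<le> c * norm a * norm w" using b by (intro mult_right_mono) auto
  finally have 1: "(norm a)\<^sup>2 \<le> c * norm a * norm w" .
  show ?thesis
  proof (cases "norm a = 0")
    case True
    have "0 \<le> c * norm w" using c0 by simp
    then show ?thesis using True a_def by simp
  next
    case False
    then have "norm a \<le> c * norm w" using 1 by (simp add: power2_eq_square mult.assoc)
    then show ?thesis by (simp add: a_def)
  qed
qed



context bio begin

definition Aop where "Aop x y = frechet_derivative (\<lambda>x. gy x y) (at x)"
definition Hop where "Hop x y = hess_yy g (x,y)"
definition Jop where "Jop x y = jac_xy g (x,y)"

lemma H_deriv: "((\<lambda>y. gy x y) has_derivative Hop x y) (at y)"
  using hess_diff frechet_derivative_works unfolding Hop_def hess_yy_def by auto

lemma A_deriv: "((\<lambda>x. gy x y) has_derivative Aop x y) (at x)"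
  using jac_diff frechet_derivative_works unfolding Aop_def by auto

lemma H_lin: "linear (Hop x y)" using H_deriv has_derivative_linear by blast
lemma A_lin: "linear (Aop x y)" using A_deriv has_derivative_linear by blast
lemma H_bl: "bounded_linear (Hop x y)" using H_deriv has_derivative_bounded_linear by blast
lemma A_bl: "bounded_linear (Aop x y)" using A_deriv has_derivative_bounded_linear by blast

lemma J_eq: "Jop x y = adjoint (Aop x y)" by (simp add: Jop_def jac_xy_def Aop_def)

lemma H_bound: "norm (Hop x y v) \<le> L * norm v"
  by (rule deriv_bound_lip[OF H_deriv]) (rule gy_lip_y)

lemma A_bound: "norm (Aop x y v) \<le> L * norm v"
  by (rule deriv_bound_lip[OF A_deriv]) (rule gy_lip_x)

lemma J_bound: "norm (Jop x y w) \<le> L * norm w"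
  unfolding J_eq using A_lin A_bound L_pos by (intro adjoint_bound) auto

lemma J_adj: "h \<bullet> Jop x y w = Aop x y h \<bullet> w"
  unfolding J_eq using adjoint_works[OF A_lin] .

lemma H_mono: "Hop x y v \<bullet> v \<ge> \<mu> * (norm v)\<^sup>2"
  by (rule deriv_mono[OF H_deriv]) (rule strong_mono)

lemma H_lip: "onorm (\<lambda>v. Hop x y v - Hop x' y' v) \<le> \<rho> * dist (x,y) (x',y')"
  using hess_lip by (simp add: Hop_def)

lemma J_lip: "onorm (\<lambda>v. Jop x y v - Jop x' y' v) \<le> \<tau> * dist (x,y) (x',y')"
  using jac_lip by (simp add: Jop_def)

lemma H_sym: "u \<bullet> Hop x y v = v \<bullet> Hop x y u"
proof (rule hess_sym_gen[where F="\<lambda>y. g (x,y)" and Gr="gy x" and R=\<rho>])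
  show "((\<lambda>y. g (x, y)) has_derivative (\<lambda>k. k \<bullet> gy x y)) (at y)" for y by (rule gy_deriv)
  show "(gy x has_derivative Hop x y) (at y)" for y using H_deriv by simp
  show "onorm (\<lambda>v. Hop x y v - Hop x y' v) \<le> \<rho> * norm (y - y')" for y y'
    using H_lip[of x y x y'] by (simp add: dist_Pair_Pair dist_norm)
  show "\<rho> \<ge> 0" by (rule rho_nn)
  show "linear (Hop x y)" for y by (rule H_lin)
qed

lemma H_inj: "inj (Hop x y)"
proof (rule linear_injective_0[OF H_lin, THEN iffD2], intro allI impI)
  fix v assume "Hop x y v = 0"
  then have "\<mu> * (norm v)\<^sup>2 \<le> 0" using H_mono[where x=x and y=y and v=v] by simp
  then show "v = 0" using mu_pos by (simp add: mult_le_0_iff)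
qed

lemma H_surj: "surj (Hop x y)"
  using linear_injective_imp_surjective[OF H_lin H_inj] by simp

definition Hinv where "Hinv x y = inv (Hop x y)"

lemma H_Hinv: "Hop x y (Hinv x y w) = w"
  unfolding Hinv_def using H_surj surj_f_inv_f by metis

lemma Hinv_H: "Hinv x y (Hop x y v) = v"
  unfolding Hinv_def using H_inj inv_f_f by metis

lemma Hinv_bound: "norm (Hinv x y w) \<le> norm w / \<mu>"
proof -
  define a where "a = Hinv x y w"
  have "\<mu> * (norm a)\<^sup>2 \<le> Hop x y a \<bullet> a" by (rule H_mono)
  also have "\<dots> = w \<bullet> a" by (simp add: a_def H_Hinv)
  also have "\<dots> \<le> norm w * norm a" by (rule norm_cauchy_schwarz)
  finally have 1: "\<mu> * (norm a)\<^sup>2 \<le> norm w * norm a" .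
  show ?thesis
  proof (cases "norm a = 0")
    case True then show ?thesis using mu_pos by (simp add: a_def)
  next
    case False
    then have "\<mu> * norm a \<le> norm w" using 1 by (simp add: power2_eq_square mult.assoc[symmetric])
    then show ?thesis using mu_pos by (simp add: a_def field_simps)
  qed
qed

lemma Hinv_lin: "linear (Hinv x y)"
proof (rule linearI)
  fix a b :: 'b and c :: real
  have "Hop x y (Hinv x y a + Hinv x y b) = a + b"
    using linear_add[OF H_lin] H_Hinv by simp
  then show "Hinv x y (a + b) = Hinv x y a + Hinv x y b" by (metis Hinv_H)
  have "Hop x y (c *\<^sub>R Hinv x y a) = c *\<^sub>R a"
    using linear_cmul[OF H_lin] H_Hinv by simp
  then show "Hinv x y (c *\<^sub>R a) = c *\<^sub>R Hinv x y a" by (metis Hinv_H)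
qed

lemma Hinv_bl: "bounded_linear (Hinv x y)"
proof -
  interpret linear "Hinv x y" by (rule Hinv_lin)
  show ?thesis
  proof (unfold_locales)
    show "\<exists>K. \<forall>w. norm (Hinv x y w) \<le> norm w * K"
      using Hinv_bound by (intro exI[of _ "1/\<mu>"]) (simp add: field_simps)
  qed
qed

lemma Hinv_sym: "a \<bullet> Hinv x y b = Hinv x y a \<bullet> b"
proof -
  have "a \<bullet> Hinv x y b = Hop x y (Hinv x y a) \<bullet> Hinv x y b" by (simp add: H_Hinv)
  also have "\<dots> = Hinv x y a \<bullet> Hop x y (Hinv x y b)" using H_sym by (simp add: inner_commute)
  also have "\<dots> = Hinv x y a \<bullet> b" by (simp add: H_Hinv)
  finally show ?thesis .
qed

end


context bio begin

lemma H_lip_cont: "dist (Blinfun (Hop x' y')) (Blinfun (Hop x y)) \<le> \<rho> * dist (x',y') (x,y)"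
proof -
  have "dist (Blinfun (Hop x' y')) (Blinfun (Hop x y)) = onorm (\<lambda>v. Hop x' y' v - Hop x y v)"
    by (simp add: dist_norm norm_blinfun.rep_eq minus_blinfun.rep_eq bounded_linear_Blinfun_apply[OF H_bl] fun_diff_def)
  also have "\<dots> \<le> \<rho> * dist (x',y') (x,y)" by (rule H_lip)
  finally show ?thesis .
qed

lemma gy_joint:
  "((\<lambda>z. gy (fst z) (snd z)) has_derivative (\<lambda>t. Aop x y (fst t) + Hop x y (snd t))) (at (x,y))"
proof -
  have c: "continuous (at (x, y) within UNIV \<times> UNIV) (\<lambda>(x, y). Blinfun (Hop x y))"
    unfolding UNIV_Times_UNIV continuous_at_eps_delta
  proof (intro allI impI)
    fix e :: real assume e: "e > 0"
    show "\<exists>d>0. \<forall>z'. dist z' (x,y) < d \<longrightarrow> dist ((\<lambda>(x, y). Blinfun (Hop x y)) z') ((\<lambda>(x, y). Blinfun (Hop x y)) (x,y)) < e"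
    proof (intro exI[of _ "e / (\<rho> + 1)"] conjI allI impI)
      show "e / (\<rho> + 1) > 0" using e rho_nn by simp
      fix z' :: "'a \<times> 'b" assume z': "dist z' (x,y) < e / (\<rho> + 1)"
      obtain x' y' where zz: "z' = (x',y')" by (cases z')
      have "dist (Blinfun (Hop x' y')) (Blinfun (Hop x y)) \<le> \<rho> * dist (x',y') (x,y)" by (rule H_lip_cont)
      also have "\<dots> \<le> (\<rho> + 1) * dist (x',y') (x,y)" by (intro mult_right_mono) auto
      also have "\<dots> < e" using z' zz rho_nn by (simp add: field_simps)
      finally show "dist ((\<lambda>(x, y). Blinfun (Hop x y)) z') ((\<lambda>(x, y). Blinfun (Hop x y)) (x,y)) < e"
        using zz by simp
    qed
  qed
  have "((\<lambda>(x, y). gy x y) has_derivative (\<lambda>(tx, ty). Aop x y tx + blinfun_apply (Blinfun (Hop x y)) ty)) (at (x, y) within UNIV \<times> UNIV)"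
  proof (rule has_derivative_partialsI[where fy="\<lambda>x y. Blinfun (Hop x y)"])
    show "((\<lambda>x. gy x y) has_derivative Aop x y) (at x within UNIV)" using A_deriv by simp
    show "((\<lambda>y. gy x y) has_derivative blinfun_apply (Blinfun (Hop x y))) (at y within UNIV)" for x y
      using H_deriv by (simp add: bounded_linear_Blinfun_apply[OF H_bl])
  qed (use c in auto)
  then show ?thesis by (simp add: bounded_linear_Blinfun_apply[OF H_bl] split_def)
qed

lemma gy_joint_diff: "(\<lambda>z. gy (fst z) (snd z)) differentiable (at z)"
  using gy_joint[of "fst z" "snd z"] unfolding differentiable_def by auto

end


context bio begin

lemma ystar_deriv:
  "(ystar g has_derivative (\<lambda>h. - Hinv x0 (ystar g x0) (Aop x0 (ystar g x0) h))) (at x0)"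
proof -
  define y0 where "y0 = ystar g x0"
  define D where "D h = - Hinv x0 y0 (Aop x0 y0 h)" for h
  have bl: "bounded_linear D"
    unfolding D_def using bounded_linear_compose[OF Hinv_bl A_bl]
    by (intro bounded_linear_minus) (simp add: o_def)
  have k0: "kappa > 0" using kappa_gt1 by simp
  have main: "\<exists>d>0. \<forall>x. norm (x - x0) < d \<longrightarrow> norm (ystar g x - ystar g x0 - D (x - x0)) \<le> e * norm (x - x0)"
    if e: "e > 0" for e
  proof -
    define e1 where "e1 = e * \<mu> / (1 + kappa)"
    have e1: "e1 > 0" using e mu_pos k0 by (simp add: e1_def)
    obtain d1 where d1: "d1 > 0" and dd: "\<And>z. norm (z - (x0,y0)) < d1 \<Longrightarrow>
        norm (gy (fst z) (snd z) - gy (fst (x0,y0)) (snd (x0,y0)) - (Aop x0 y0 (fst (z - (x0,y0))) + Hop x0 y0 (snd (z - (x0,y0)))))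
          \<le> e1 * norm (z - (x0,y0))"
      using gy_joint[of x0 y0] e1 unfolding has_derivative_at_alt by blast
    show ?thesis
    proof (intro exI[of _ "d1 / (1 + kappa)"] conjI allI impI)
      show "d1 / (1 + kappa) > 0" using d1 k0 by simp
      fix x assume x: "norm (x - x0) < d1 / (1 + kappa)"
      define \<delta> where "\<delta> = ystar g x - y0"
      have nd: "norm \<delta> \<le> kappa * norm (x - x0)" unfolding \<delta>_def y0_def by (rule ystar_lip)
      have nz: "norm ((x, ystar g x) - (x0,y0)) \<le> (1 + kappa) * norm (x - x0)"
      proof -
        have "norm ((x, ystar g x) - (x0,y0)) = norm ((x - x0, \<delta>))" by (simp add: \<delta>_def)
        also have "\<dots> \<le> norm (x - x0) + norm \<delta>" by (rule norm_pair_le)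
        also have "\<dots> \<le> (1 + kappa) * norm (x - x0)" using nd by (simp add: algebra_simps)
        finally show ?thesis .
      qed
      have "(1 + kappa) * norm (x - x0) < d1" using x k0 by (simp add: field_simps)
      then have r: "norm (gy x (ystar g x) - gy x0 y0 - (Aop x0 y0 (x - x0) + Hop x0 y0 \<delta>))
          \<le> e1 * norm ((x, ystar g x) - (x0,y0))"
        using dd[of "(x, ystar g x)"] nz by (simp add: \<delta>_def)
      have z1: "gy x (ystar g x) = 0" "gy x0 y0 = 0" using ystar_zero y0_def by auto
      have "ystar g x - ystar g x0 - D (x - x0) = \<delta> + Hinv x0 y0 (Aop x0 y0 (x - x0))"
        by (simp add: D_def \<delta>_def y0_def)
      also have "\<dots> = Hinv x0 y0 (Hop x0 y0 \<delta> + Aop x0 y0 (x - x0))"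
        using linear_add[OF Hinv_lin] Hinv_H by simp
      finally have eq: "ystar g x - ystar g x0 - D (x - x0) = Hinv x0 y0 (Hop x0 y0 \<delta> + Aop x0 y0 (x - x0))" .
      have "norm (Hop x0 y0 \<delta> + Aop x0 y0 (x - x0)) \<le> e1 * ((1 + kappa) * norm (x - x0))"
      proof -
        have "norm (Hop x0 y0 \<delta> + Aop x0 y0 (x - x0)) = norm (gy x (ystar g x) - gy x0 y0 - (Aop x0 y0 (x - x0) + Hop x0 y0 \<delta>))"
          using z1 norm_minus_cancel[of "Hop x0 y0 \<delta> + Aop x0 y0 (x - x0)"] by (simp add: add.commute)
        also have "\<dots> \<le> e1 * norm ((x, ystar g x) - (x0,y0))" by (rule r)
        also have "\<dots> \<le> e1 * ((1 + kappa) * norm (x - x0))" using nz e1 by (intro mult_left_mono) auto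
        finally show ?thesis .
      qed
      then have "norm (Hinv x0 y0 (Hop x0 y0 \<delta> + Aop x0 y0 (x - x0))) \<le> e1 * ((1 + kappa) * norm (x - x0)) / \<mu>"
        using Hinv_bound[of x0 y0 "Hop x0 y0 \<delta> + Aop x0 y0 (x - x0)"] mu_pos
        by (smt (verit) divide_right_mono)
      also have "\<dots> = (e1 * (1 + kappa)) * norm (x - x0) / \<mu>" by (simp add: mult.assoc)
      also have "e1 * (1 + kappa) = e * \<mu>" using k0 by (simp add: e1_def)
      also have "e * \<mu> * norm (x - x0) / \<mu> = e * norm (x - x0)" using mu_pos by simp
      finally show "norm (ystar g x - ystar g x0 - D (x - x0)) \<le> e * norm (x - x0)" using eq by simp
    qed
  qed
  have "(ystar g has_derivative D) (at x0)"
    unfolding has_derivative_at_alt using bl main by blast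
  then show ?thesis by (simp add: D_def[abs_def] y0_def)
qed

end


context bio begin

definition Gfun where "Gfun x y = grad_x f (x,y) - Jop x y (Hinv x y (grad_y f (x,y)))"

lemma f_grad: "(f has_derivative (\<lambda>k. k \<bullet> grad f z)) (at z)"
  using grad_has_deriv f_diff by blast

lemma Phi_deriv: "(Phi f g has_derivative (\<lambda>h. h \<bullet> Gfun x (ystar g x))) (at x)"
proof -
  define y where "y = ystar g x"
  have 1: "((\<lambda>x. (x, ystar g x)) has_derivative (\<lambda>h. (h, - Hinv x y (Aop x y h)))) (at x)"
    unfolding y_def by (intro has_derivative_Pair has_derivative_ident ystar_deriv)
  have "((\<lambda>x. f (x, ystar g x)) has_derivative (\<lambda>h. (h, - Hinv x y (Aop x y h)) \<bullet> grad f (x, ystar g x))) (at x)"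
    using has_derivative_compose[OF 1 f_grad] .
  moreover have "(\<lambda>h. (h, - Hinv x y (Aop x y h)) \<bullet> grad f (x, ystar g x)) = (\<lambda>h. h \<bullet> Gfun x y)"
  proof
    fix h
    have "(h, - Hinv x y (Aop x y h)) \<bullet> grad f (x, y) = h \<bullet> grad_x f (x,y) - Hinv x y (Aop x y h) \<bullet> grad_y f (x,y)"
      by (simp add: grad_x_def grad_y_def inner_prod_def split: prod.splits)
    also have "Hinv x y (Aop x y h) \<bullet> grad_y f (x,y) = Aop x y h \<bullet> Hinv x y (grad_y f (x,y))"
      using Hinv_sym by simp
    also have "\<dots> = h \<bullet> Jop x y (Hinv x y (grad_y f (x,y)))" using J_adj by simp
    finally show "(h, - Hinv x y (Aop x y h)) \<bullet> grad f (x, ystar g x) = h \<bullet> Gfun x y"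
      by (simp add: Gfun_def inner_diff_right y_def)
  qed
  ultimately show ?thesis by (simp add: Phi_def[abs_def] y_def)
qed

lemma gradf_bound: "norm (grad f z) \<le> M"
proof -
  have "norm ((\<lambda>k. k \<bullet> grad f z) v) \<le> M * norm v" for v
  proof (rule deriv_bound_lip[OF f_grad])
    show "norm (f a - f b) \<le> M * norm (a - b)" for a b using f_lip[rule_format, of a b] by (simp add: dist_norm)
  qed
  from this[of "grad f z"] have "(norm (grad f z))\<^sup>2 \<le> M * norm (grad f z)"
    by (simp add: power2_norm_eq_inner)
  then show ?thesis using M_nn by (cases "norm (grad f z) = 0") (auto simp: power2_eq_square)
qed

lemma gradfy_bound: "norm (grad_y f z) \<le> M"
  using gradf_bound[of z] norm_le_comp(2)[of "grad f z"] by (simp add: grad_y_def)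

lemma gradfx_lip: "norm (grad_x f z - grad_x f z') \<le> L * dist z z'"
  using gradf_lip[rule_format, of z z'] norm_le_comp(1)[of "grad f z - grad f z'"] by (simp add: grad_x_def)

lemma gradfy_lip: "norm (grad_y f z - grad_y f z') \<le> L * dist z z'"
  using gradf_lip[rule_format, of z z'] norm_le_comp(2)[of "grad f z - grad f z'"] by (simp add: grad_y_def)

lemma J_lin: "linear (Jop x y)" unfolding J_eq by (rule adjoint_linear[OF A_lin])

lemma J_diff_bound: "norm (Jop x y w - Jop x' y' w) \<le> \<tau> * dist (x,y) (x',y') * norm w"
proof -
  have bl: "bounded_linear (\<lambda>v. Jop x y v - Jop x' y' v)"
    using J_lin[of x y] J_lin[of x' y'] by (intro bounded_linear_sub) (simp_all add: linear_conv_bounded_linear)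
  have "norm (Jop x y w - Jop x' y' w) \<le> onorm (\<lambda>v. Jop x y v - Jop x' y' v) * norm w"
    using onorm[OF bl] by simp
  also have "\<dots> \<le> \<tau> * dist (x,y) (x',y') * norm w" using J_lip by (intro mult_right_mono) auto
  finally show ?thesis .
qed

lemma H_diff_bound: "norm (Hop x y w - Hop x' y' w) \<le> \<rho> * dist (x,y) (x',y') * norm w"
proof -
  have bl: "bounded_linear (\<lambda>v. Hop x y v - Hop x' y' v)"
    using H_bl[of x y] H_bl[of x' y'] by (intro bounded_linear_sub)
  have "norm (Hop x y w - Hop x' y' w) \<le> onorm (\<lambda>v. Hop x y v - Hop x' y' v) * norm w"
    using onorm[OF bl] by simp
  also have "\<dots> \<le> \<rho> * dist (x,y) (x',y') * norm w" using H_lip by (intro mult_right_mono) auto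
  finally show ?thesis .
qed

definition Cg where "Cg = L + \<tau> * M / \<mu> + L * \<rho> * M / \<mu>\<^sup>2 + L\<^sup>2 / \<mu>"

lemma Gfun_lip: "norm (Gfun x y - Gfun x' y') \<le> Cg * dist (x,y) (x',y')"
proof -
  define r where "r = dist (x,y) (x',y')"
  define b where "b = grad_y f (x,y)"
  define b' where "b' = grad_y f (x',y')"
  define J where "J = Jop x y" define J' where "J' = Jop x' y'"
  define Hi where "Hi = Hinv x y" define Hi' where "Hi' = Hinv x' y'"
  have r0: "r \<ge> 0" by (simp add: r_def)
  have nb: "norm b \<le> M" "norm b' \<le> M" by (simp_all add: b_def b'_def gradfy_bound)
  have hb: "norm (Hi b) \<le> M / \<mu>" "norm (Hi' b) \<le> M / \<mu>"
    unfolding Hi_def Hi'_def using mu_pos nb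
    by (auto intro!: order_trans[OF Hinv_bound divide_right_mono])
  have t1: "norm ((J - J') (Hi b)) \<le> \<tau> * r * (M / \<mu>)"
  proof -
    have "norm ((J - J') (Hi b)) \<le> \<tau> * r * norm (Hi b)"
      using J_diff_bound by (simp add: J_def J'_def r_def)
    also have "\<dots> \<le> \<tau> * r * (M / \<mu>)"
      using hb tau_nn r0 by (intro mult_left_mono) auto
    finally show ?thesis .
  qed
  have t2: "norm (J' (Hi b - Hi' b)) \<le> L * (1/\<mu> * (\<rho> * r * (M / \<mu>)))"
  proof -
    have eqb: "b = Hop x' y' (Hi' b)" by (simp add: Hi'_def H_Hinv)
    have "Hi b - Hi' b = Hi (b - Hop x y (Hi' b))"
      by (simp add: Hi_def linear_diff[OF Hinv_lin] Hinv_H)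
    also have "\<dots> = Hi (Hop x' y' (Hi' b) - Hop x y (Hi' b))" using eqb by simp
    finally have e: "Hi b - Hi' b = Hi (Hop x' y' (Hi' b) - Hop x y (Hi' b))" .
    have "norm (Hop x' y' (Hi' b) - Hop x y (Hi' b)) \<le> \<rho> * r * norm (Hi' b)"
      using H_diff_bound[of x' y' "Hi' b" x y] by (simp add: r_def dist_commute)
    also have "\<dots> \<le> \<rho> * r * (M / \<mu>)"
      using hb rho_nn r0 by (intro mult_left_mono) auto
    finally have h1: "norm (Hop x' y' (Hi' b) - Hop x y (Hi' b)) \<le> \<rho> * r * (M / \<mu>)" .
    have "norm (Hi b - Hi' b) \<le> norm (Hop x' y' (Hi' b) - Hop x y (Hi' b)) / \<mu>"
      unfolding e by (simp only: Hi_def Hinv_bound)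
    also have "\<dots> \<le> (\<rho> * r * (M / \<mu>)) / \<mu>" using h1 mu_pos by (intro divide_right_mono) auto
    also have "\<dots> = 1/\<mu> * (\<rho> * r * (M / \<mu>))" by simp
    finally have h2: "norm (Hi b - Hi' b) \<le> 1/\<mu> * (\<rho> * r * (M / \<mu>))" .
    have "norm (J' (Hi b - Hi' b)) \<le> L * norm (Hi b - Hi' b)" unfolding J'_def by (rule J_bound)
    also have "\<dots> \<le> L * (1/\<mu> * (\<rho> * r * (M / \<mu>)))" using h2 L_pos by (intro mult_left_mono) auto
    finally show ?thesis .
  qed
  have t3: "norm (J' (Hi' (b - b'))) \<le> L * (1/\<mu> * (L * r))"
  proof -
    have "norm (J' (Hi' (b - b'))) \<le> L * norm (Hi' (b - b'))" unfolding J'_def by (rule J_bound)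
    also have "norm (Hi' (b - b')) \<le> norm (b - b') / \<mu>" unfolding Hi'_def by (rule Hinv_bound)
    also have "norm (b - b') \<le> L * r" unfolding b_def b'_def r_def by (rule gradfy_lip)
    finally show ?thesis using L_pos mu_pos by (simp add: divide_right_mono mult_left_mono)
  qed
  have t0: "norm (grad_x f (x,y) - grad_x f (x',y')) \<le> L * r" unfolding r_def by (rule gradfx_lip)
  have split: "Gfun x y - Gfun x' y' = (grad_x f (x,y) - grad_x f (x',y')) - ((J - J') (Hi b) + J' (Hi b - Hi' b) + J' (Hi' (b - b')))"
    by (simp add: Gfun_def J_def J'_def Hi_def Hi'_def b_def b'_def linear_diff[OF J_lin] linear_diff[OF Hinv_lin] algebra_simps)
  have "norm (Gfun x y - Gfun x' y') \<le> norm (grad_x f (x,y) - grad_x f (x',y')) + (norm ((J - J') (Hi b)) + norm (J' (Hi b - Hi' b)) + norm (J' (Hi' (b - b'))))"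
    unfolding split by (intro order_trans[OF norm_triangle_ineq4] add_left_mono order_trans[OF norm_triangle_ineq] add_mono) auto
  also have "\<dots> \<le> L * r + (\<tau> * r * (M / \<mu>) + L * (1/\<mu> * (\<rho> * r * (M / \<mu>))) + L * (1/\<mu> * (L * r)))"
    using t0 t1 t2 t3 by linarith
  also have "\<dots> = Cg * r" by (simp add: Cg_def power2_eq_square field_simps)
  finally show ?thesis by (simp add: r_def)
qed

end


lemma differentiable_fst': "f differentiable (at x) \<Longrightarrow> (\<lambda>x. fst (f x)) differentiable (at x)"
  using differentiable_compose[of fst "f" x UNIV] bounded_linear_imp_differentiable[OF bounded_linear_fst] by auto

lemma differentiable_snd': "f differentiable (at x) \<Longrightarrow> (\<lambda>x. snd (f x)) differentiable (at x)"
  using differentiable_compose[of snd "f" x UNIV] bounded_linear_imp_differentiable[OF bounded_linear_snd] by auto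

context bio begin

lemma loop_diff: "(\<lambda>z. inner_loop g a e (fst z) (snd z) t) differentiable (at z0)"
proof (induction t)
  case 0
  show ?case by (simp add: bounded_linear_imp_differentiable[OF bounded_linear_snd])
next
  case (Suc t)
  define p where "p z = inner_loop g a e (fst z) (snd z) t" for z
  define U where "U z = snd (p z) - a *\<^sub>R gy (fst z) (snd (p z))" for z
  have eq: "(\<lambda>z. inner_loop g a e (fst z) (snd z) (Suc t)) = (\<lambda>z. (U z, U z + e *\<^sub>R (U z - fst (p z))))"
    by (rule ext, rule prod_eqI) (simp_all add: loop_suc U_def p_def del: inner_loop.simps)
  have pd: "p differentiable (at z0)" using Suc by (simp add: p_def[abs_def])
  have gd: "(\<lambda>z. gy (fst z) (snd (p z))) differentiable (at z0)"
  proof -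
    have "(\<lambda>z. (fst z, snd (p z))) differentiable (at z0)"
      by (intro differentiable_Pair differentiable_snd'[OF pd]) (simp add: bounded_linear_imp_differentiable[OF bounded_linear_fst])
    from differentiable_compose[OF gy_joint_diff this] show ?thesis by simp
  qed
  have Ud: "U differentiable (at z0)"
    unfolding U_def[abs_def] by (intro differentiable_diff differentiable_scaleR differentiable_snd'[OF pd] gd differentiable_const)
  show ?case unfolding eq
    by (intro differentiable_Pair differentiable_add differentiable_scaleR differentiable_diff Ud differentiable_const differentiable_fst'[OF pd])
qed

end


context bio begin

definition Fmap where "Fmap T \<eta> z = yT g (1/L) \<eta> T (fst z) (snd z) - ystar g (fst z)"
definition LipF where "LipF T = 27/10 * (5/2)^T + kappa"

lemma LipF_nn: "LipF T \<ge> 0" using kappa_gt1 by (simp add: LipF_def)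

lemma F_diff: "Fmap T \<eta> differentiable (at z)"
proof -
  have 1: "(\<lambda>z. yT g (1/L) \<eta> T (fst z) (snd z)) differentiable (at z)"
    unfolding yT_def by (rule differentiable_snd'[OF loop_diff])
  have "ystar g differentiable (at (fst z))" using ystar_deriv differentiable_def by blast
  then have 2: "(\<lambda>z. ystar g (fst z)) differentiable (at z)"
    using differentiable_compose[of "ystar g" fst z UNIV] bounded_linear_imp_differentiable[OF bounded_linear_fst] by auto
  show ?thesis unfolding Fmap_def[abs_def] using 1 2 by (rule differentiable_diff)
qed

lemma F_lip:
  assumes eta: "0 \<le> \<eta>" "\<eta> \<le> 1"
  shows "norm (Fmap T \<eta> z - Fmap T \<eta> z') \<le> LipF T * norm (z - z')"
proof -
  obtain x y where z: "z = (x,y)" by (cases z)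
  obtain x' y' where z': "z' = (x',y')" by (cases z')
  have nx: "norm (x - x') \<le> norm (z - z')" using norm_le_comp(1)[of "z - z'"] by (simp add: z z')
  have ny: "norm (y - y') \<le> norm (z - z')" using norm_le_comp(2)[of "z - z'"] by (simp add: z z')
  have "Fmap T \<eta> z - Fmap T \<eta> z' = (yT g (1/L) \<eta> T x y - yT g (1/L) \<eta> T x' y') - (ystar g x - ystar g x')"
    by (simp add: Fmap_def z z')
  then have "norm (Fmap T \<eta> z - Fmap T \<eta> z') \<le> norm (yT g (1/L) \<eta> T x y - yT g (1/L) \<eta> T x' y') + norm (ystar g x - ystar g x')"
    by (metis norm_triangle_ineq4)
  also have "\<dots> \<le> (5/2)^T * (6/5 * norm (y - y') + 3/2 * norm (x - x')) + kappa * norm (x - x')"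
    by (intro add_mono loop_lip[OF eta] ystar_lip)
  also have "\<dots> \<le> (5/2)^T * (6/5 * norm (z - z') + 3/2 * norm (z - z')) + kappa * norm (z - z')"
    using nx ny kappa_gt1 by (intro add_mono mult_left_mono) auto
  also have "\<dots> = LipF T * norm (z - z')" by (simp add: LipF_def algebra_simps)
  finally show ?thesis .
qed

lemma Q_grad:
  assumes eta: "0 \<le> \<eta>" "\<eta> \<le> 1"
  shows "\<exists>qv. ((\<lambda>z. (norm (Fmap T \<eta> z))\<^sup>2) has_derivative (\<lambda>w. w \<bullet> qv)) (at z0)
             \<and> norm qv \<le> 2 * LipF T * norm (Fmap T \<eta> z0)"
proof -
  obtain DF where DF: "(Fmap T \<eta> has_derivative DF) (at z0)"
    using F_diff differentiable_def by blast
  have lin: "linear DF" using DF has_derivative_linear by blast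
  have bnd: "norm (DF v) \<le> LipF T * norm v" for v
    by (rule deriv_bound_lip[OF DF F_lip[OF eta]])
  define qv where "qv = 2 *\<^sub>R adjoint DF (Fmap T \<eta> z0)"
  have "((\<lambda>z. Fmap T \<eta> z \<bullet> Fmap T \<eta> z) has_derivative (\<lambda>h. Fmap T \<eta> z0 \<bullet> DF h + DF h \<bullet> Fmap T \<eta> z0)) (at z0)"
    using has_derivative_inner[OF DF DF] .
  moreover have "(\<lambda>h. Fmap T \<eta> z0 \<bullet> DF h + DF h \<bullet> Fmap T \<eta> z0) = (\<lambda>w. w \<bullet> qv)"
    by (rule ext) (simp add: qv_def adjoint_works[OF lin] inner_commute)
  ultimately have d: "((\<lambda>z. (norm (Fmap T \<eta> z))\<^sup>2) has_derivative (\<lambda>w. w \<bullet> qv)) (at z0)"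
    by (simp add: power2_norm_eq_inner)
  have "norm qv \<le> 2 * (LipF T * norm (Fmap T \<eta> z0))"
    unfolding qv_def using adjoint_bound[OF lin bnd LipF_nn] by simp
  then show ?thesis using d by (intro exI[of _ qv]) (simp add: mult.assoc)
qed

end


lemma frechet_smooth_plus:
  fixes S :: "'v::euclidean_space \<Rightarrow> real" and k :: "'v \<Rightarrow> ereal"
  assumes S: "(S has_derivative (\<lambda>w. w \<bullet> sv)) (at z1)"
    and kfin: "\<bar>k z1\<bar> \<noteq> \<infinity>"
    and kge: "\<And>z. k z \<ge> k z1 + ereal (b \<bullet> (z - z1) - c * (norm (z - z1))\<^sup>2)"
    and c0: "c \<ge> 0"
  shows "sv + b \<in> frechet_subdiff (\<lambda>z. ereal (S z) + k z) z1"
proof -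
  obtain r1 where r1: "k z1 = ereal r1" using kfin by (cases "k z1") auto
  define q where "q z = ((ereal (S z) + k z) - (ereal (S z1) + k z1) - ereal ((sv + b) \<bullet> (z - z1))) / ereal (norm (z - z1))" for z
  have ev: "eventually (\<lambda>z. ereal (- e) \<le> q z) (at z1)" if e: "e > 0" for e
  proof -
    obtain d where d: "d > 0" and dd: "\<And>y. norm (y - z1) < d \<Longrightarrow> norm (S y - S z1 - (y - z1) \<bullet> sv) \<le> (e/2) * norm (y - z1)"
      using S e unfolding has_derivative_at_alt by (meson half_gt_zero)
    define \<delta> where "\<delta> = min d (e / (2 * c + 1))"
    have \<delta>: "\<delta> > 0" using d e c0 by (simp add: \<delta>_def add_nonneg_pos)
    show ?thesis
    proof (rule eventually_mono[OF eventually_at_ball'[OF \<delta>, of z1 UNIV]])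
      fix z assume z: "z \<in> ball z1 \<delta> \<and> z \<noteq> z1 \<and> z \<in> UNIV"
      define n where "n = norm (z - z1)"
      have n: "n > 0" "n < \<delta>" using z by (auto simp: n_def dist_norm norm_minus_commute)
      have A: "\<bar>S z - S z1 - (z - z1) \<bullet> sv\<bar> \<le> (e/2) * n"
        using dd[of z] n by (simp add: n_def \<delta>_def)
      have Sb: "S z - S z1 - (z - z1) \<bullet> sv \<ge> - (e/2) * n"
        using A abs_ge_minus_self[of "S z - S z1 - (z - z1) \<bullet> sv"] by linarith
      have cn: "c * n\<^sup>2 \<le> (e/2) * n"
      proof -
        have "c * n \<le> e/2"
        proof -
          have "c * n \<le> c * (e / (2 * c + 1))" using n c0 by (intro mult_left_mono) (auto simp: \<delta>_def)
          also have "\<dots> \<le> e / 2" using c0 e by (simp add: field_simps)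
          finally show ?thesis .
        qed
        then show ?thesis using n by (simp add: power2_eq_square mult.assoc[symmetric] mult_right_mono)
      qed
      show "ereal (- e) \<le> q z"
      proof (cases "k z")
        case PInf
        then show ?thesis using n by (simp add: q_def r1 n_def[symmetric])
      next
        case MInf
        then show ?thesis using kge[of z] r1 by simp
      next
        case (real rz)
        have kz: "rz \<ge> r1 + (b \<bullet> (z - z1) - c * n\<^sup>2)" using kge[of z] r1 real by (simp add: n_def)
        have "q z = ereal (((S z + rz) - (S z1 + r1) - (sv + b) \<bullet> (z - z1)) / n)"
          using n by (simp add: q_def r1 real n_def[symmetric])
        moreover have "- e * n \<le> (S z + rz) - (S z1 + r1) - (sv + b) \<bullet> (z - z1)"
          using Sb cn kz by (simp add: inner_add_left inner_commute algebra_simps)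
        ultimately show ?thesis using n by (simp add: pos_le_divide_eq)
      qed
    qed
  qed
  have "0 \<le> Liminf (at z1) q"
  proof (rule ereal_le_epsilon2)
    fix e :: real assume e: "e > 0"
    have "ereal (- e) \<le> Liminf (at z1) q" by (rule Liminf_bounded[OF ev[OF e]])
    then show "0 \<le> Liminf (at z1) q + ereal e"
      by (cases "Liminf (at z1) q") auto
  qed
  moreover have "\<bar>ereal (S z1) + k z1\<bar> \<noteq> \<infinity>" using r1 by simp
  ultimately show ?thesis unfolding frechet_subdiff_def q_def[abs_def] by simp
qed



lemma prox_ineq:
  fixes h :: "'a::real_inner \<Rightarrow> ereal"
  assumes beta: "\<beta> > 0" and u: "u \<in> prox \<beta> h v"
    and hp: "\<forall>x. h x \<noteq> -\<infinity>" "\<exists>x. h x \<noteq> \<infinity>"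
  shows "\<bar>h u\<bar> \<noteq> \<infinity>"
    and "\<And>x. h x \<ge> h u + ereal (((1/\<beta>) *\<^sub>R (v - u)) \<bullet> (x - u) - 1/(2*\<beta>) * (norm (x - u))\<^sup>2)"
proof -
  have pr: "ereal \<beta> * h u + ereal ((norm (u - v))\<^sup>2 / 2) \<le> ereal \<beta> * h w + ereal ((norm (w - v))\<^sup>2 / 2)" for w
    using u unfolding prox_def by blast
  obtain w0 where w0: "h w0 \<noteq> \<infinity>" using hp by blast
  obtain r0 where r0: "h w0 = ereal r0" using w0 hp by (cases "h w0") auto
  have hu_fin: "h u \<noteq> \<infinity>"
  proof
    assume hu: "h u = \<infinity>"
    have A: "ereal \<beta> * h u + ereal ((norm (u - v))\<^sup>2 / 2) = \<infinity>" using beta hu by simp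
    have B: "ereal \<beta> * h w0 + ereal ((norm (w0 - v))\<^sup>2 / 2) = ereal (\<beta> * r0 + (norm (w0 - v))\<^sup>2 / 2)"
      using r0 by simp
    show False using pr[of w0] unfolding A B by simp
  qed
  then obtain r1 where r1: "h u = ereal r1" using hp by (cases "h u") auto
  then show "\<bar>h u\<bar> \<noteq> \<infinity>" by simp
  fix x
  show "h x \<ge> h u + ereal (((1/\<beta>) *\<^sub>R (v - u)) \<bullet> (x - u) - 1/(2*\<beta>) * (norm (x - u))\<^sup>2)"
  proof (cases "h x")
    case PInf then show ?thesis using r1 by simp
  next
    case MInf then show ?thesis using hp by simp
  next
    case (real r)
    have "\<beta> * r1 + (norm (u - v))\<^sup>2 / 2 \<le> \<beta> * r + (norm (x - v))\<^sup>2 / 2"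
      using pr[of x] r1 real by simp
    moreover have "(norm (x - v))\<^sup>2 = (norm (x - u))\<^sup>2 + 2 * ((x - u) \<bullet> (u - v)) + (norm (u - v))\<^sup>2"
    proof -
      have "x - v = (x - u) + (u - v)" by simp
      then show ?thesis unfolding power2_norm_eq_inner
        by (metis (no_types, lifting) inner_add_left inner_add_right inner_commute mult_2 add.assoc)
    qed
    ultimately have "\<beta> * r1 \<le> \<beta> * r + (norm (x - u))\<^sup>2 / 2 + (x - u) \<bullet> (u - v)" by (simp add: add_divide_distrib)
    then have "r1 \<le> r + ((norm (x - u))\<^sup>2 / 2 + (x - u) \<bullet> (u - v)) / \<beta>"
      using beta by (simp add: field_simps)
    moreover have "((1/\<beta>) *\<^sub>R (v - u)) \<bullet> (x - u) = - ((x - u) \<bullet> (u - v)) / \<beta>"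
      by (simp add: inner_commute inner_diff_right inner_diff_left)
    ultimately have "r1 + (((1/\<beta>) *\<^sub>R (v - u)) \<bullet> (x - u) - 1/(2*\<beta>) * (norm (x - u))\<^sup>2) \<le> r"
      using beta by (simp add: field_simps)
    then show ?thesis using r1 real by simp
  qed
qed



context bio begin

lemma main_bound:
  fixes h :: "'a \<Rightarrow> ereal" and \<beta> \<eta> :: real and T :: nat and x0 x1 :: 'a and y1 y2 v0 :: 'b
  assumes hp: "\<forall>x. h x \<noteq> -\<infinity>" "\<exists>x. h x \<noteq> \<infinity>"
    and eta: "0 \<le> \<eta>" "\<eta> \<le> 1"
    and beta: "0 < \<beta>" "Cg * (1 + kappa) \<le> 1/\<beta>"
    and y2: "y2 = yT g (1/L) \<eta> T x1 y1"
    and vh: "Hop x0 y1 v0 = grad_y f (x0, y1)"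
    and xstep: "x1 \<in> prox \<beta> h (x0 - \<beta> *\<^sub>R (grad_x f (x0, y1) - Jop x0 y1 v0))"
  shows "dist0 (limiting_subdiff (potH f g h (1/L) \<eta> T) (x1, y1))
          \<le> ereal (2/\<beta> * norm (x1 - x0) + Cg * norm (y1 - ystar g x0) + 7/4 * LipF T * norm (y2 - ystar g x1))"
proof -
  define z1 where "z1 = (x1, y1)"
  define G0 where "G0 = Gfun x0 y1"
  define G1 where "G1 = Gfun x1 (ystar g x1)"
  have v0: "v0 = Hinv x0 y1 (grad_y f (x0, y1))" using vh Hinv_H by metis
  have G0e: "grad_x f (x0, y1) - Jop x0 y1 v0 = G0" by (simp add: G0_def Gfun_def v0)
  define v where "v = x0 - \<beta> *\<^sub>R G0"
  define a where "a = (1/\<beta>) *\<^sub>R (v - x1)"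
  have x1p: "x1 \<in> prox \<beta> h v" using xstep by (simp add: G0e v_def)
  have hfin: "\<bar>h x1\<bar> \<noteq> \<infinity>" by (rule prox_ineq(1)[OF beta(1) x1p hp])
  have hge: "h x \<ge> h x1 + ereal (a \<bullet> (x - x1) - 1/(2*\<beta>) * (norm (x - x1))\<^sup>2)" for x
    unfolding a_def by (rule prox_ineq(2)[OF beta(1) x1p hp])
  define S where "S z = Phi f g (fst z) + 7/8 * (norm (Fmap T \<eta> z))\<^sup>2" for z
  obtain qv where qd: "((\<lambda>z. (norm (Fmap T \<eta> z))\<^sup>2) has_derivative (\<lambda>w. w \<bullet> qv)) (at z1)"
    and qn: "norm qv \<le> 2 * LipF T * norm (Fmap T \<eta> z1)"
    using Q_grad[OF eta] by blast
  define sv where "sv = (G1, 0::'b) + (7/8) *\<^sub>R qv"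
  have Sd: "(S has_derivative (\<lambda>w. w \<bullet> sv)) (at z1)"
  proof -
    have 1: "((\<lambda>z. Phi f g (fst z)) has_derivative (\<lambda>w. fst w \<bullet> G1)) (at z1)"
    proof -
      have fd: "((\<lambda>z. fst z) has_derivative (\<lambda>w. fst w)) (at z1)"
        by (rule has_derivative_fst[OF has_derivative_ident])
      have Pd: "(Phi f g has_derivative (\<lambda>h. h \<bullet> G1)) (at (fst z1))"
        using Phi_deriv[of x1] by (simp add: z1_def G1_def)
      show ?thesis using has_derivative_compose[OF fd Pd] by simp
    qed
    have "(S has_derivative (\<lambda>w. fst w \<bullet> G1 + 7/8 * (w \<bullet> qv))) (at z1)"
      unfolding S_def[abs_def] by (intro has_derivative_add 1 has_derivative_mult_right qd)
    moreover have "(\<lambda>w. fst w \<bullet> G1 + 7/8 * (w \<bullet> qv)) = (\<lambda>w. w \<bullet> sv)"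
      by (rule ext) (simp add: sv_def inner_add_right inner_prod_def split: prod.splits)
    ultimately show ?thesis by simp
  qed
  have kge: "h (fst z) \<ge> h (fst z1) + ereal ((a, 0::'b) \<bullet> (z - z1) - 1/(2*\<beta>) * (norm (z - z1))\<^sup>2)" for z
  proof -
    have "norm (fst z - x1) \<le> norm (z - z1)" using norm_le_comp(1)[of "z - z1"] by (simp add: z1_def)
    then have sq: "(norm (fst z - x1))\<^sup>2 \<le> (norm (z - z1))\<^sup>2" by (simp add: power_mono)
    have sq2: "1/(2*\<beta>) * (norm (fst z - x1))\<^sup>2 \<le> 1/(2*\<beta>) * (norm (z - z1))\<^sup>2"
      using sq beta by (intro mult_left_mono) auto
    have ip: "(a, 0::'b) \<bullet> (z - z1) = a \<bullet> (fst z - x1)" by (simp add: z1_def inner_prod_def split: prod.splits)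
    have "(a, 0::'b) \<bullet> (z - z1) - 1/(2*\<beta>) * (norm (z - z1))\<^sup>2 \<le> a \<bullet> (fst z - x1) - 1/(2*\<beta>) * (norm (fst z - x1))\<^sup>2"
      using sq2 ip by linarith
    then have "h (fst z1) + ereal ((a, 0::'b) \<bullet> (z - z1) - 1/(2*\<beta>) * (norm (z - z1))\<^sup>2)
        \<le> h x1 + ereal (a \<bullet> (fst z - x1) - 1/(2*\<beta>) * (norm (fst z - x1))\<^sup>2)"
      by (simp add: z1_def add_left_mono)
    also have "\<dots> \<le> h (fst z)" by (rule hge)
    finally show ?thesis .
  qed
  have fs: "sv + (a, 0) \<in> frechet_subdiff (\<lambda>z. ereal (S z) + h (fst z)) z1"
    by (rule frechet_smooth_plus[OF Sd _ kge]) (use hfin beta in \<open>simp_all add: z1_def\<close>)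
  have potH_eq: "potH f g h (1/L) \<eta> T = (\<lambda>z. ereal (S z) + h (fst z))"
  proof
    fix z
    show "potH f g h (1/L) \<eta> T z = ereal (S z) + h (fst z)"
      by (cases "h (fst z)") (simp_all add: potH_def S_def Fmap_def)
  qed
  define u where "u = sv + (a, 0)"
  have "u \<in> limiting_subdiff (potH f g h (1/L) \<eta> T) z1"
    unfolding limiting_subdiff_def potH_eq
    using fs by (intro CollectI exI[of _ "\<lambda>_. z1"] exI[of _ "\<lambda>_. u"]) (simp add: u_def)
  then have d0: "dist0 (limiting_subdiff (potH f g h (1/L) \<eta> T) (x1, y1)) \<le> ereal (norm u)"
    unfolding dist0_def z1_def by (rule INF_lower)
  have ueq: "u = (G1 - G0 + (1/\<beta>) *\<^sub>R (x0 - x1), 0) + (7/8) *\<^sub>R qv"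
    using beta by (simp add: u_def sv_def a_def v_def algebra_simps)
  have nu0: "norm u \<le> norm (G1 - G0 + (1/\<beta>) *\<^sub>R (x0 - x1)) + 7/8 * norm qv"
    unfolding ueq by (rule order_trans[OF norm_triangle_ineq]) (simp add: norm_Pair)
  have nu1: "norm (G1 - G0 + (1/\<beta>) *\<^sub>R (x0 - x1)) \<le> norm (G1 - G0) + 1/\<beta> * norm (x1 - x0)"
    using beta by (rule_tac order_trans[OF norm_triangle_ineq]) (simp add: norm_minus_commute)
  have nu2: "norm qv \<le> 2 * LipF T * norm (y2 - ystar g x1)"
    using qn by (simp add: Fmap_def z1_def y2)
  have Cg0: "Cg \<ge> 0" using L_pos mu_pos M_nn tau_nn rho_nn by (simp add: Cg_def)
  have dd: "dist (x1, ystar g x1) (x0, y1) \<le> (1 + kappa) * norm (x1 - x0) + norm (y1 - ystar g x0)"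
  proof -
    have a1: "dist (x1, ystar g x1) (x0, y1) \<le> norm (x1 - x0) + norm (ystar g x1 - y1)"
      using norm_pair_le[of "x1 - x0" "ystar g x1 - y1"] by (simp add: dist_norm)
    have a2: "norm (ystar g x1 - y1) \<le> norm (ystar g x1 - ystar g x0) + norm (y1 - ystar g x0)"
      using norm_triangle_ineq4[of "ystar g x1 - ystar g x0" "y1 - ystar g x0"] by simp
    have a3: "norm (ystar g x1 - ystar g x0) \<le> kappa * norm (x1 - x0)" by (rule ystar_lip)
    show ?thesis using a1 a2 a3 by (simp add: algebra_simps)
  qed
  have ng: "norm (G1 - G0) \<le> Cg * ((1 + kappa) * norm (x1 - x0) + norm (y1 - ystar g x0))"
  proof -
    have "norm (G1 - G0) \<le> Cg * dist (x1, ystar g x1) (x0, y1)" unfolding G1_def G0_def by (rule Gfun_lip)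
    also have "\<dots> \<le> Cg * ((1 + kappa) * norm (x1 - x0) + norm (y1 - ystar g x0))"
      using dd Cg0 by (rule mult_left_mono)
    finally show ?thesis .
  qed
  have cb: "Cg * (1 + kappa) * norm (x1 - x0) \<le> 1/\<beta> * norm (x1 - x0)"
    using beta(2) by (rule mult_right_mono) simp
  have "norm u \<le> 2/\<beta> * norm (x1 - x0) + Cg * norm (y1 - ystar g x0) + 7/4 * LipF T * norm (y2 - ystar g x1)"
  proof -
    have e1: "Cg * ((1 + kappa) * norm (x1 - x0) + norm (y1 - ystar g x0)) = Cg * (1 + kappa) * norm (x1 - x0) + Cg * norm (y1 - ystar g x0)"
      by (simp add: algebra_simps)
    have e2: "2/\<beta> * norm (x1 - x0) = 1/\<beta> * norm (x1 - x0) + 1/\<beta> * norm (x1 - x0)" by simp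
    have e3: "7/8 * (2 * LipF T * norm (y2 - ystar g x1)) = 7/4 * LipF T * norm (y2 - ystar g x1)" by simp
    have nu2': "7/8 * norm qv \<le> 7/8 * (2 * LipF T * norm (y2 - ystar g x1))" using nu2 by simp
    show ?thesis using nu0 nu1 nu2' ng cb e1 e2 e3 by linarith
  qed
  then show ?thesis using d0 by (meson ereal_less_eq(3) order_trans)
qed

end


lemma lin_help:
  fixes P G K x y :: real
  assumes "0 \<le> P" "0 \<le> G" "0 \<le> K" "x \<le> G + K" "2 * (P + G + K) \<le> y"
  shows "x \<le> y"
proof -
  have "2 * (P + G + K) = 2 * P + 2 * G + 2 * K" by simp
  then show ?thesis using assms by linarith
qed

theorem mainTheorem6:
  fixes f g :: "'a::euclidean_space \<times> 'b::euclidean_space \<Rightarrow> real"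
    and h :: "'a \<Rightarrow> ereal"
    and \<mu> L M \<tau> \<rho> \<beta> :: real and T :: nat
    and xs :: "nat \<Rightarrow> 'a" and ys vhat :: "nat \<Rightarrow> 'b"
  defines "\<kappa> \<equiv> L / \<mu>"
    and "L\<^sub>\<Phi> \<equiv> L + (2 * L\<^sup>2 + \<tau> * M\<^sup>2) / \<mu> + (\<rho> * L * M + L ^ 3 + \<tau> * M * L) / \<mu>\<^sup>2
                 + \<rho> * L\<^sup>2 * M / \<mu> ^ 3"
    and "\<Gamma> \<equiv> 3 * L\<^sup>2 + 3 * \<tau>\<^sup>2 * M\<^sup>2 / \<mu>\<^sup>2
                 + 6 * L\<^sup>2 * (1 + sqrt (L / \<mu>))\<^sup>2 * (L / \<mu> + \<rho> * M / \<mu>\<^sup>2)\<^sup>2"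
    and "\<alpha> \<equiv> 1 / L"
    and "\<eta> \<equiv> (sqrt (L / \<mu>) - 1) / (sqrt (L / \<mu>) + 1)"
  assumes mu_pos: "\<mu> > 0" and L_pos: "L > 0"
    and consts_nonneg: "M \<ge> 0" "\<tau> \<ge> 0" "\<rho> \<ge> 0"
    \<comment> \<open>A1\<close>
    and g_sc: "\<forall>x. strongly_convex \<mu> (\<lambda>y. g (x, y))"
    and h_proper: "\<forall>x. h x \<noteq> -\<infinity>" "\<exists>x. h x \<noteq> \<infinity>"
    and h_lsc: "\<forall>x. h x \<le> Liminf (at x) h"
    and bdd_below: "\<exists>c. \<forall>x. ereal c \<le> ereal (Phi f g x) + h x"
    and bdd_sublevel: "\<forall>c. bounded {x. ereal (Phi f g x) + h x \<le> ereal c}"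
    \<comment> \<open>A2 (joint differentiability and Lipschitz conditions)\<close>
    and f_diff: "\<forall>z. f differentiable (at z)"
    and g_diff: "\<forall>z. g differentiable (at z)"
    and f_lip: "\<forall>z z'. \<bar>f z - f z'\<bar> \<le> M * dist z z'"
    and gradf_lip: "\<forall>z z'. norm (grad f z - grad f z') \<le> L * dist z z'"
    and gradg_lip: "\<forall>z z'. norm (grad g z - grad g z') \<le> L * dist z z'"
    and hess_diff: "\<forall>x y. (\<lambda>y. grad_y g (x, y)) differentiable (at y)"
    and jac_diff: "\<forall>x y. (\<lambda>x. grad_y g (x, y)) differentiable (at x)"
    and jac_lip: "\<forall>z z'. onorm (\<lambda>v. jac_xy g z v - jac_xy g z' v) \<le> \<tau> * dist z z'"
    and hess_lip: "\<forall>z z'. onorm (\<lambda>v. hess_yy g z v - hess_yy g z' v) \<le> \<rho> * dist z z'"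
    \<comment> \<open>A3\<close>
    and A3: "\<forall>z. limiting_subdiff
               (\<lambda>z. ereal ((norm (yT g \<alpha> \<eta> T (fst z) (snd z) - ystar g (fst z)))\<^sup>2)) z \<noteq> {}"
    \<comment> \<open>parameters\<close>
    and kappa_gt: "\<kappa> > 1"
    and beta: "0 < \<beta>" "\<beta> \<le> 1 / 2 * inverse (L\<^sub>\<Phi> + \<Gamma> + \<kappa>\<^sup>2)"
    and T_ge: "real T \<ge> ln (8 * (1 + \<kappa>)) / ln (inverse (1 - 1 / sqrt \<kappa>))"
    \<comment> \<open>the iterates of PBA\<close>
    and ys_step: "\<forall>k. ys (Suc k) = yT g \<alpha> \<eta> T (xs k) (ys k)"
    and vhat_sol: "\<forall>k. hess_yy g (xs k, ys (Suc k)) (vhat k) = grad_y f (xs k, ys (Suc k))"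
    and xs_step: "\<forall>k. xs (Suc k) \<in> prox \<beta> h (xs k - \<beta> *\<^sub>R
                     (grad_x f (xs k, ys (Suc k)) - jac_xy g (xs k, ys (Suc k)) (vhat k)))"
  shows "\<forall>k. dist0 (limiting_subdiff (potH f g h \<alpha> \<eta> T) (xs (Suc k), ys (Suc k)))
           \<le> ereal (2 / \<beta> * norm (xs (Suc k) - xs k)
                    + sqrt \<Gamma> * norm (ys (Suc k) - ystar g (xs k))
                    + 2 * ((5/2) ^ (T + 1) + \<kappa>) * norm (ys (Suc (Suc k)) - ystar g (xs (Suc k))))"
proof -
  have kd: "\<kappa> = L / \<mu>" using assms(1) by simp
  have LPd: "L\<^sub>\<Phi> = L + (2 * L\<^sup>2 + \<tau> * M\<^sup>2) / \<mu> + (\<rho> * L * M + L ^ 3 + \<tau> * M * L) / \<mu>\<^sup>2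
                 + \<rho> * L\<^sup>2 * M / \<mu> ^ 3" using assms(2) by simp
  have Gd: "\<Gamma> = 3 * L\<^sup>2 + 3 * \<tau>\<^sup>2 * M\<^sup>2 / \<mu>\<^sup>2
                 + 6 * L\<^sup>2 * (1 + sqrt (L / \<mu>))\<^sup>2 * (L / \<mu> + \<rho> * M / \<mu>\<^sup>2)\<^sup>2" using assms(3) by simp
  have ad: "\<alpha> = 1 / L" using assms(4) by simp
  have ed: "\<eta> = (sqrt (L / \<mu>) - 1) / (sqrt (L / \<mu>) + 1)" using assms(5) by simp
  have muL: "\<mu> < L" using kappa_gt mu_pos unfolding kd by (simp add: field_simps)
  interpret bio f g \<mu> L M \<tau> \<rho>
    using mu_pos L_pos muL consts_nonneg g_sc f_diff g_diff f_lip gradf_lip gradg_lip hess_diff jac_diff jac_lip hess_lip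
    by unfold_locales auto
  have kap: "kappa = \<kappa>" by (simp add: kappa_def kd)
  have k1: "\<kappa> > 1" by (rule kappa_gt)
  define s where "s = sqrt \<kappa>"
  have s1: "s > 1" using k1 by (simp add: s_def)
  have eta: "0 \<le> \<eta>" "\<eta> \<le> 1" using s1 by (simp_all add: ed kd[symmetric] s_def[symmetric] divide_le_eq)
  have Cg0: "Cg \<ge> 0" using L_pos mu_pos consts_nonneg by (simp add: Cg_def)
  define a where "a = L" define b where "b = \<tau> * M / \<mu>" define c where "c = L * (\<kappa> + \<rho> * M / \<mu>\<^sup>2)"
  have Cgabc: "Cg = a + b + c" using mu_pos by (simp add: Cg_def a_def b_def c_def kd power2_eq_square field_simps)
  have Gabc: "\<Gamma> \<ge> 3 * (a\<^sup>2 + b\<^sup>2 + c\<^sup>2)"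
  proof -
    define W where "W = 6 * L\<^sup>2 * (1 + s)\<^sup>2 * (\<kappa> + \<rho> * M / \<mu>\<^sup>2)\<^sup>2"
    have "(1 + s)\<^sup>2 \<ge> 1" using s1 by simp
    then have "6 * L\<^sup>2 * (1 + s)\<^sup>2 * (\<kappa> + \<rho> * M / \<mu>\<^sup>2)\<^sup>2 \<ge> 6 * L\<^sup>2 * 1 * (\<kappa> + \<rho> * M / \<mu>\<^sup>2)\<^sup>2"
      by (intro mult_left_mono mult_right_mono) auto
    moreover have "c\<^sup>2 = L\<^sup>2 * (\<kappa> + \<rho> * M / \<mu>\<^sup>2)\<^sup>2" by (simp add: c_def power_mult_distrib)
    ultimately have W6: "W \<ge> 6 * c\<^sup>2" by (simp add: W_def)
    have b2: "b\<^sup>2 = \<tau>\<^sup>2 * M\<^sup>2 / \<mu>\<^sup>2" by (simp add: b_def power_mult_distrib power_divide)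
    have "\<Gamma> = 3 * a\<^sup>2 + 3 * (\<tau>\<^sup>2 * M\<^sup>2 / \<mu>\<^sup>2) + W"
      by (simp add: Gd a_def s_def kd W_def)
    moreover have "3 * c\<^sup>2 \<le> W" using W6 zero_le_power2[of c] by linarith
    ultimately show ?thesis using b2 by (simp add: algebra_simps)
  qed
  have CgG: "Cg\<^sup>2 \<le> \<Gamma>"
  proof -
    have "(a + b + c)\<^sup>2 \<le> 3 * (a\<^sup>2 + b\<^sup>2 + c\<^sup>2)"
      using sum_squares_ge_zero[of "a - b" "b - c"] zero_le_power2[of "a - c"]
      by (simp add: power2_eq_square algebra_simps)
    then show ?thesis using Gabc Cgabc by simp
  qed
  have CgsG: "Cg \<le> sqrt \<Gamma>" using CgG Cg0 by (simp add: real_le_rsqrt)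
  have LP0: "L\<^sub>\<Phi> \<ge> 0" using L_pos mu_pos consts_nonneg by (simp add: LPd)
  have G0: "\<Gamma> \<ge> 0" using Gabc by (smt (verit) zero_le_power2)
  have Ssum: "L\<^sub>\<Phi> + \<Gamma> + \<kappa>\<^sup>2 > 0" using LP0 G0 k1 by (smt (verit) zero_less_power2)
  have binv: "2 * (L\<^sub>\<Phi> + \<Gamma> + \<kappa>\<^sup>2) \<le> 1 / \<beta>"
  proof -
    have "\<beta> \<le> 1 / (2 * (L\<^sub>\<Phi> + \<Gamma> + \<kappa>\<^sup>2))" using beta(2) by (simp add: inverse_eq_divide)
    then show ?thesis using beta(1) Ssum by (simp add: field_simps)
  qed
  have Cgk: "Cg * (1 + kappa) \<le> 1 / \<beta>"
  proof -
    have "Cg * (1 + \<kappa>) \<le> Cg\<^sup>2 + (1 + \<kappa>)\<^sup>2 / 4"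
      using zero_le_power2[of "Cg - (1 + \<kappa>)/2"] by (simp add: power2_eq_square algebra_simps)
    also have "(1 + \<kappa>)\<^sup>2 / 4 \<le> \<kappa>\<^sup>2"
    proof -
      have kk: "\<kappa> \<le> \<kappa> * \<kappa>" using mult_right_mono[of 1 \<kappa> \<kappa>] k1 by simp
      have e1: "(1 + \<kappa>)\<^sup>2 = 1 + 2 * \<kappa> + \<kappa> * \<kappa>" by (simp add: power2_eq_square algebra_simps)
      have e2: "\<kappa>\<^sup>2 = \<kappa> * \<kappa>" by (simp add: power2_eq_square)
      have "1 + 2 * \<kappa> + \<kappa> * \<kappa> \<le> 4 * (\<kappa> * \<kappa>)" using kk k1 by linarith
      then show ?thesis unfolding e1 e2 by simp
    qed
    finally have "Cg * (1 + \<kappa>) \<le> \<Gamma> + \<kappa>\<^sup>2" using CgG by simp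
    then show ?thesis unfolding kap using lin_help[OF LP0 G0 zero_le_power2[of \<kappa>] _ binv] by blast
  qed
  have Lipb: "7/4 * LipF T \<le> 2 * ((5/2) ^ (T + 1) + \<kappa>)"
    using k1 by (simp add: LipF_def kap)
  show ?thesis
  proof
    fix k
    define x0 where "x0 = xs k" define x1 where "x1 = xs (Suc k)"
    define y1 where "y1 = ys (Suc k)" define y2 where "y2 = ys (Suc (Suc k))"
    have y2e: "y2 = yT g (1/L) \<eta> T x1 y1" using ys_step by (simp add: y2_def x1_def y1_def ad)
    have vh: "Hop x0 y1 (vhat k) = grad_y f (x0, y1)" using vhat_sol by (simp add: Hop_def x0_def y1_def)
    have xst: "x1 \<in> prox \<beta> h (x0 - \<beta> *\<^sub>R (grad_x f (x0, y1) - Jop x0 y1 (vhat k)))"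
      using xs_step by (simp add: Jop_def x0_def x1_def y1_def)
    have mb: "dist0 (limiting_subdiff (potH f g h (1/L) \<eta> T) (x1, y1))
          \<le> ereal (2/\<beta> * norm (x1 - x0) + Cg * norm (y1 - ystar g x0) + 7/4 * LipF T * norm (y2 - ystar g x1))"
      by (rule main_bound[OF h_proper eta beta(1) Cgk y2e vh xst])
    have "2/\<beta> * norm (x1 - x0) + Cg * norm (y1 - ystar g x0) + 7/4 * LipF T * norm (y2 - ystar g x1)
        \<le> 2/\<beta> * norm (x1 - x0) + sqrt \<Gamma> * norm (y1 - ystar g x0) + 2 * ((5/2) ^ (T + 1) + \<kappa>) * norm (y2 - ystar g x1)"
      using CgsG Lipb by (intro add_mono mult_right_mono order_refl) auto
    then show "dist0 (limiting_subdiff (potH f g h \<alpha> \<eta> T) (xs (Suc k), ys (Suc k)))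
           \<le> ereal (2 / \<beta> * norm (xs (Suc k) - xs k)
                    + sqrt \<Gamma> * norm (ys (Suc k) - ystar g (xs k))
                    + 2 * ((5/2) ^ (T + 1) + \<kappa>) * norm (ys (Suc (Suc k)) - ystar g (xs (Suc k))))"
      using mb unfolding ad x0_def x1_def y1_def y2_def by (meson ereal_less_eq(3) order_trans)
  qed
qed

end
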